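(* Let $g_t$ be the hypoelliptic Brownian motion on $\mathbb{H}$, $g^\ast_t=\max_{0\le s\le t}|g_s|$, $\phi(t)=\sqrt{\frac{\log\log t}{t}}$, and $t_n=n^n$. Then for every $\varepsilon>0$, \[ \mathbb{P}\left(\bigcap_{k\ge2}\bigcup_{n\ge k}\left\{\phi(t_n)\,g^\ast_{t_{n-1}}>\varepsilon\right\}\right)=0. \] Consequently $\lim_{n\to\infty}\phi(t_n)\,g^\ast_{t_{n-1}}=0$ almost surely.
   Context: The Heisenberg group $\mathbb{H}$ is $\mathbb{R}^2\times\mathbb{R}$ with multiplication $(\mathbf{v}_1,z_1)\cdot(\mathbf{v}_2,z_2)=(\mathbf{v}_1+\mathbf{v}_2,\ z_1+z_2+\tfrac12\omega(\mathbf{v}_1,\mathbf{v}_2))$, where $\omega((x_1,y_1),(x_2,y_2))=x_1y_2-x_2y_1$. The homogeneous norm on $\mathbb{H}$ is $|(\mathbf{x},z)|:=\left(\|\mathbf{x}\|_{\mathbb{R}^2}^4+z^2\right)^{1/4}$. Let $\bm{W}_t$ be a standard two-dimensional Brownian motion. The hypoelliptic Brownian motion is $g_t:=(\bm{W}_t,A_t)$ with $A_t:=\frac12\int_0^t (W_1(s)\,dW_2(s)-W_2(s)\,dW_1(s))$. *)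

theory Defs
  imports "HOL-Probability.Probability"
begin

definition coord :: "(real \<Rightarrow> 'a \<Rightarrow> real) \<Rightarrow> (real \<Rightarrow> 'a \<Rightarrow> real) \<Rightarrow> bool \<Rightarrow> real \<Rightarrow> 'a \<Rightarrow> real" where
  "coord W1 W2 b = (if b then W2 else W1)"

definition std_bm2 :: "'a measure \<Rightarrow> (real \<Rightarrow> 'a \<Rightarrow> real) \<Rightarrow> (real \<Rightarrow> 'a \<Rightarrow> real) \<Rightarrow> bool" where
  "std_bm2 M W1 W2 \<longleftrightarrow> prob_space M \<and>
     (\<forall>t. W1 t \<in> borel_measurable M \<and> W2 t \<in> borel_measurable M) \<and>
     (\<forall>\<omega>\<in>space M. W1 0 \<omega> = 0 \<and> W2 0 \<omega> = 0 \<and>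
        continuous_on {0..} (\<lambda>t. W1 t \<omega>) \<and> continuous_on {0..} (\<lambda>t. W2 t \<omega>)) \<and>
     (\<forall>(ts :: nat \<Rightarrow> real) (n :: nat). 0 \<le> ts 0 \<and> (\<forall>k<n. ts k < ts (Suc k)) \<longrightarrow>
        prob_space.indep_vars M (\<lambda>_. borel)
          (\<lambda>(k, b) \<omega>. coord W1 W2 b (ts (Suc k)) \<omega> - coord W1 W2 b (ts k) \<omega>)
          ({..<n} \<times> (UNIV :: bool set)) \<and>
        (\<forall>k<n. \<forall>b. distributed M lborel
           (\<lambda>\<omega>. coord W1 W2 b (ts (Suc k)) \<omega> - coord W1 W2 b (ts k) \<omega>)
           (normal_density 0 (sqrt (ts (Suc k) - ts k)))))"

definition levy_riemann :: "(real \<Rightarrow> 'a \<Rightarrow> real) \<Rightarrow> (real \<Rightarrow> 'a \<Rightarrow> real) \<Rightarrow> real \<Rightarrow> nat \<Rightarrow> 'a \<Rightarrow> real" where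
  "levy_riemann W1 W2 t m \<omega> = (1/2) * (\<Sum>i<2^m.
      let s = t * real i / 2^m; s' = t * real (Suc i) / 2^m in
      W1 s \<omega> * (W2 s' \<omega> - W2 s \<omega>) - W2 s \<omega> * (W1 s' \<omega> - W1 s \<omega>))"

text \<open>A is (a continuous version of) the Levy area
  A_t = 1/2 \<integral>_0^t (W1 dW2 - W2 dW1) (Ito integral), characterised as the limit in probability
  of left-point Riemann sums.\<close>
definition levy_area :: "'a measure \<Rightarrow> (real \<Rightarrow> 'a \<Rightarrow> real) \<Rightarrow> (real \<Rightarrow> 'a \<Rightarrow> real) \<Rightarrow> (real \<Rightarrow> 'a \<Rightarrow> real) \<Rightarrow> bool" where
  "levy_area M W1 W2 A \<longleftrightarrow>
     (\<forall>t. A t \<in> borel_measurable M) \<and>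
     (\<forall>\<omega>\<in>space M. continuous_on {0..} (\<lambda>t. A t \<omega>)) \<and>
     (\<forall>t\<ge>0. \<forall>e>0. (\<lambda>m. measure M {\<omega>\<in>space M. \<bar>levy_riemann W1 W2 t m \<omega> - A t \<omega>\<bar> > e})
                      \<longlonglongrightarrow> 0)"

definition heis_norm :: "real \<Rightarrow> real \<Rightarrow> real \<Rightarrow> real" where
  "heis_norm x y z = ((x^2 + y^2)^2 + z^2) powr (1/4)"

definition hbm_max :: "(real \<Rightarrow> 'a \<Rightarrow> real) \<Rightarrow> (real \<Rightarrow> 'a \<Rightarrow> real) \<Rightarrow> (real \<Rightarrow> 'a \<Rightarrow> real) \<Rightarrow> real \<Rightarrow> 'a \<Rightarrow> real" where
  "hbm_max W1 W2 A t \<omega> = (SUP s\<in>{0..t}. heis_norm (W1 s \<omega>) (W2 s \<omega>) (A s \<omega>))"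

definition lil_phi :: "real \<Rightarrow> real" where
  "lil_phi t = sqrt (ln (ln t) / t)"

definition tseq :: "nat \<Rightarrow> real" where
  "tseq n = real n ^ n"

end

theory Submission
  imports Defs
begin


definition mom :: "'a measure \<Rightarrow> ('a \<Rightarrow> real) \<Rightarrow> bool" where
  "mom M X \<longleftrightarrow> X \<in> borel_measurable M \<and> (\<forall>p::nat. integrable M (\<lambda>\<omega>. \<bar>X \<omega>\<bar> ^ p))"

lemma mom_meas[measurable_dest]: "mom M X \<Longrightarrow> X \<in> borel_measurable M"
  by (simp add: mom_def)

lemma mom_int_abs: "mom M X \<Longrightarrow> integrable M (\<lambda>\<omega>. \<bar>X \<omega>\<bar> ^ p)"
  by (simp add: mom_def)

lemma mom_int_pow: assumes "mom M X" shows "integrable M (\<lambda>\<omega>. X \<omega> ^ p)"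
proof (rule Bochner_Integration.integrable_bound[OF mom_int_abs[OF assms, of p]])
  show "(\<lambda>\<omega>. X \<omega> ^ p) \<in> borel_measurable M" using assms by measurable
  show "AE x in M. norm (X x ^ p) \<le> norm (\<bar>X x\<bar> ^ p)" by (simp add: power_abs)
qed

lemma mom_int: assumes "mom M X" shows "integrable M X"
  using mom_int_pow[OF assms, of 1] by simp

lemma mom_add: assumes "mom M X" "mom M Y" shows "mom M (\<lambda>\<omega>. X \<omega> + Y \<omega>)"
  unfolding mom_def
proof safe
  show "(\<lambda>\<omega>. X \<omega> + Y \<omega>) \<in> borel_measurable M" using assms by measurable
  fix p :: nat
  have b: "\<bar>x + y\<bar> ^ p \<le> 2 ^ p * (\<bar>x\<bar> ^ p + \<bar>y\<bar> ^ p)" for x y :: real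
  proof -
    have "\<bar>x + y\<bar> \<le> 2 * max \<bar>x\<bar> \<bar>y\<bar>" by auto
    hence "\<bar>x + y\<bar> ^ p \<le> (2 * max \<bar>x\<bar> \<bar>y\<bar>) ^ p" by (intro power_mono) auto
    also have "\<dots> = 2 ^ p * max \<bar>x\<bar> \<bar>y\<bar> ^ p" by (simp add: power_mult_distrib)
    also have "max \<bar>x\<bar> \<bar>y\<bar> ^ p \<le> \<bar>x\<bar> ^ p + \<bar>y\<bar> ^ p" by (cases "\<bar>x\<bar> \<le> \<bar>y\<bar>") (auto simp: max_def)
    hence "2 ^ p * max \<bar>x\<bar> \<bar>y\<bar> ^ p \<le> 2 ^ p * (\<bar>x\<bar> ^ p + \<bar>y\<bar> ^ p)" by simp
    finally show ?thesis .
  qed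
  show "integrable M (\<lambda>\<omega>. \<bar>X \<omega> + Y \<omega>\<bar> ^ p)"
  proof (rule Bochner_Integration.integrable_bound)
    show "integrable M (\<lambda>\<omega>. 2 ^ p * (\<bar>X \<omega>\<bar> ^ p + \<bar>Y \<omega>\<bar> ^ p))"
      using assms by (intro integrable_mult_right Bochner_Integration.integrable_add mom_int_abs)
    show "(\<lambda>\<omega>. \<bar>X \<omega> + Y \<omega>\<bar> ^ p) \<in> borel_measurable M" using assms by measurable
    show "AE x in M. norm (\<bar>X x + Y x\<bar> ^ p) \<le> norm (2 ^ p * (\<bar>X x\<bar> ^ p + \<bar>Y x\<bar> ^ p))"
      using b by (auto intro: order.trans[OF _ abs_ge_self])
  qed
qed

lemma mom_mult: assumes "mom M X" "mom M Y" shows "mom M (\<lambda>\<omega>. X \<omega> * Y \<omega>)"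
  unfolding mom_def
proof safe
  show "(\<lambda>\<omega>. X \<omega> * Y \<omega>) \<in> borel_measurable M" using assms by measurable
  fix p :: nat
  have b: "\<bar>x * y\<bar> ^ p \<le> \<bar>x\<bar> ^ (2*p) + \<bar>y\<bar> ^ (2*p)" for x y :: real
  proof -
    have "\<bar>x * y\<bar> ^ p = \<bar>x\<bar> ^ p * \<bar>y\<bar> ^ p" by (simp add: abs_mult power_mult_distrib)
    also have "\<dots> \<le> (\<bar>x\<bar> ^ p)^2 + (\<bar>y\<bar> ^ p)^2"
    proof -
      have h1: "2 * (\<bar>x\<bar> ^ p * \<bar>y\<bar> ^ p) \<le> (\<bar>x\<bar> ^ p)^2 + (\<bar>y\<bar> ^ p)^2"
        using sum_squares_bound[of "\<bar>x\<bar> ^ p" "\<bar>y\<bar> ^ p"] by (simp add: mult.assoc)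
      have h2: "0 \<le> \<bar>x\<bar> ^ p * \<bar>y\<bar> ^ p" by simp
      from h1 h2 show ?thesis by linarith
    qed
    finally show ?thesis by (simp add: power_mult[symmetric] mult.commute)
  qed
  show "integrable M (\<lambda>\<omega>. \<bar>X \<omega> * Y \<omega>\<bar> ^ p)"
  proof (rule Bochner_Integration.integrable_bound)
    show "integrable M (\<lambda>\<omega>. \<bar>X \<omega>\<bar> ^ (2*p) + \<bar>Y \<omega>\<bar> ^ (2*p))"
      using assms by (intro Bochner_Integration.integrable_add mom_int_abs)
    show "(\<lambda>\<omega>. \<bar>X \<omega> * Y \<omega>\<bar> ^ p) \<in> borel_measurable M" using assms by measurable
    show "AE x in M. norm (\<bar>X x * Y x\<bar> ^ p) \<le> norm (\<bar>X x\<bar> ^ (2*p) + \<bar>Y x\<bar> ^ (2*p))"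
      using b by (auto intro: order.trans[OF _ abs_ge_self])
  qed
qed

lemma (in prob_space) mom_const: "mom M (\<lambda>\<omega>. c)"
  unfolding mom_def by auto

lemma (in prob_space) mom_bounded:
  assumes "X \<in> borel_measurable M" "\<And>\<omega>. \<omega> \<in> space M \<Longrightarrow> \<bar>X \<omega>\<bar> \<le> B"
  shows "mom M X"
  unfolding mom_def
proof safe
  fix p :: nat
  show "integrable M (\<lambda>\<omega>. \<bar>X \<omega>\<bar> ^ p)"
  proof (rule Bochner_Integration.integrable_bound)
    show "integrable M (\<lambda>\<omega>. B ^ p)" by simp
    show "(\<lambda>\<omega>. \<bar>X \<omega>\<bar> ^ p) \<in> borel_measurable M" using assms by measurable
    show "AE x in M. norm (\<bar>X x\<bar> ^ p) \<le> norm (B ^ p)"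
    proof (rule AE_I2)
      fix x assume "x \<in> space M"
      then have "\<bar>X x\<bar> ^ p \<le> B ^ p" by (intro power_mono) (auto simp: assms)
      then show "norm (\<bar>X x\<bar> ^ p) \<le> norm (B ^ p)" by auto
    qed
  qed
qed (fact assms)

lemma mom_scale: "mom M X \<Longrightarrow> mom M (\<lambda>\<omega>. c * X \<omega>)"
  unfolding mom_def by (auto simp: abs_mult power_mult_distrib)

lemma mom_neg: "mom M X \<Longrightarrow> mom M (\<lambda>\<omega>. - X \<omega>)"
  unfolding mom_def by auto

lemma mom_diff: "mom M X \<Longrightarrow> mom M Y \<Longrightarrow> mom M (\<lambda>\<omega>. X \<omega> - Y \<omega>)"
  using mom_add[OF _ mom_neg, of M X Y] by simp



lemma (in prob_space) mom_sum': "finite I \<Longrightarrow> (\<And>i. i \<in> I \<Longrightarrow> mom M (X i)) \<Longrightarrow> mom M (\<lambda>\<omega>. \<Sum>i\<in>I. X i \<omega>)"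
  by (induction I rule: finite_induct) (auto intro!: mom_add mom_const)

lemma (in prob_space) mom_normal:
  assumes "distributed M lborel X (normal_density 0 \<sigma>)" "0 < \<sigma>"
  shows "mom M X"
  unfolding mom_def
proof safe
  show "X \<in> borel_measurable M" using assms(1) by (auto dest: distributed_measurable)
  fix p :: nat
  have "integrable lborel (\<lambda>x. normal_density 0 \<sigma> x * \<bar>x\<bar> ^ p)"
    using integrable_normal_moment_abs[OF assms(2), of 0 p] by simp
  then show "integrable M (\<lambda>\<omega>. \<bar>X \<omega>\<bar> ^ p)"
    using distributed_integrable[OF assms(1), of "\<lambda>x. \<bar>x\<bar> ^ p"] by simp
qed

lemma (in prob_space) normal_integral:
  assumes "distributed M lborel X (normal_density 0 \<sigma>)" "0 < \<sigma>" "g \<in> borel_measurable borel"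
  shows "(\<integral>\<omega>. g (X \<omega>) \<partial>M) = (\<integral>x. normal_density 0 \<sigma> x * g x \<partial>lborel)"
  using distributed_integral[OF assms(1), of g] assms by simp

lemma (in prob_space) normal_mean:
  assumes "distributed M lborel X (normal_density 0 \<sigma>)" "0 < \<sigma>"
  shows "expectation X = 0"
  using normal_integral[OF assms, of "\<lambda>x. x"] integral_normal_moment_odd[OF assms(2), of 0 0] by simp

lemma (in prob_space) normal_second:
  assumes "distributed M lborel X (normal_density 0 \<sigma>)" "0 < \<sigma>"
  shows "expectation (\<lambda>\<omega>. X \<omega> ^ 2) = \<sigma>^2"
  using normal_integral[OF assms, of "\<lambda>x. x^2"] integral_normal_moment_even[OF assms(2), of 0 1] 
  by (simp add: power2_eq_square)

lemma (in prob_space) normal_fourth: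
  assumes "distributed M lborel X (normal_density 0 \<sigma>)" "0 < \<sigma>"
  shows "expectation (\<lambda>\<omega>. X \<omega> ^ 4) = 3 * \<sigma>^4"
  using normal_integral[OF assms, of "\<lambda>x. x^4"] integral_normal_moment_even[OF assms(2), of 0 2] 
  by (simp add: fact_numeral power_numeral_reduce field_simps)


locale hgrid =
  fixes M :: "'a measure" and W1 W2 :: "real \<Rightarrow> 'a \<Rightarrow> real" and \<eta> :: real
  assumes bm: "std_bm2 M W1 W2" and eta: "0 < \<eta>"

sublocale hgrid \<subseteq> prob_space M
  using bm by (simp add: std_bm2_def)

context hgrid
begin

definition xi :: "nat \<Rightarrow> bool \<Rightarrow> 'a \<Rightarrow> real" where
  "xi k b \<omega> = coord W1 W2 b (real (Suc k) * \<eta>) \<omega> - coord W1 W2 b (real k * \<eta>) \<omega>"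

definition past :: "nat \<Rightarrow> 'a \<Rightarrow> nat \<times> bool \<Rightarrow> real" where
  "past i \<omega> = (\<lambda>p\<in>{..<i}\<times>UNIV. xi (fst p) (snd p) \<omega>)"

definition adapted :: "nat \<Rightarrow> ('a \<Rightarrow> real) \<Rightarrow> bool" where
  "adapted i G \<longleftrightarrow> (\<exists>g \<in> borel_measurable (PiM ({..<i}\<times>(UNIV::bool set)) (\<lambda>_. borel)).
      \<forall>\<omega>\<in>space M. G \<omega> = g (past i \<omega>))"

lemma coord_meas[measurable]: "coord W1 W2 b t \<in> borel_measurable M"
  using bm by (cases b) (auto simp: std_bm2_def coord_def)

lemma W_zero: "\<omega> \<in> space M \<Longrightarrow> coord W1 W2 b 0 \<omega> = 0"
  using bm by (cases b) (auto simp: std_bm2_def coord_def)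

lemma xi_meas[measurable]: "xi k b \<in> borel_measurable M"
  unfolding xi_def by measurable

lemma bm_grid:
  "indep_vars (\<lambda>_. borel) (\<lambda>(k, b) \<omega>. xi k b \<omega>) ({..<n} \<times> UNIV) \<and>
   (\<forall>k<n. \<forall>b. distributed M lborel (xi k b) (normal_density 0 (sqrt (real (Suc k) * \<eta> - real k * \<eta>))))"
proof -
  have H: "\<forall>(ts :: nat \<Rightarrow> real) (n :: nat). 0 \<le> ts 0 \<and> (\<forall>k<n. ts k < ts (Suc k)) \<longrightarrow>
        indep_vars (\<lambda>_. borel)
          (\<lambda>(k, b) \<omega>. coord W1 W2 b (ts (Suc k)) \<omega> - coord W1 W2 b (ts k) \<omega>)
          ({..<n} \<times> (UNIV :: bool set)) \<and>
        (\<forall>k<n. \<forall>b. distributed M lborel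
           (\<lambda>\<omega>. coord W1 W2 b (ts (Suc k)) \<omega> - coord W1 W2 b (ts k) \<omega>)
           (normal_density 0 (sqrt (ts (Suc k) - ts k))))"
    using bm unfolding std_bm2_def by blast
  have "0 \<le> real 0 * \<eta> \<and> (\<forall>k<n. real k * \<eta> < real (Suc k) * \<eta>)" using eta by auto
  from H[rule_format, OF this] show ?thesis unfolding xi_def[abs_def] by simp
qed

lemma indep_xi: "indep_vars (\<lambda>_. borel) (\<lambda>p. xi (fst p) (snd p)) ({..<n} \<times> UNIV)"
proof -
  have "(\<lambda>p. xi (fst p) (snd p)) = (\<lambda>(k, b) \<omega>. xi k b \<omega>)" by (auto simp: fun_eq_iff)
  then show ?thesis using bm_grid by simp
qed

lemma xi_distr: "distributed M lborel (xi k b) (normal_density 0 (sqrt \<eta>))"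
proof -
  have "real (Suc k) * \<eta> - real k * \<eta> = \<eta>" by (simp add: algebra_simps)
  then show ?thesis using bm_grid[of "Suc k"] by auto
qed

lemma sqrt_eta: "0 < sqrt \<eta>" using eta by simp

lemma xi_mom: "mom M (xi k b)"
  by (rule mom_normal[OF xi_distr sqrt_eta])

lemma xi_mean: "expectation (xi k b) = 0"
  by (rule normal_mean[OF xi_distr sqrt_eta])

lemma xi_sq: "expectation (\<lambda>\<omega>. xi k b \<omega> ^ 2) = \<eta>"
  using normal_second[OF xi_distr sqrt_eta] eta by simp

lemma xi_four: "expectation (\<lambda>\<omega>. xi k b \<omega> ^ 4) = 3 * \<eta>^2"
proof -
  have "sqrt \<eta> ^ 4 = (sqrt \<eta> ^ 2)^2" by (simp flip: power_mult)
  also have "\<dots> = \<eta>^2" using eta by simp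
  finally have "sqrt \<eta> ^ 4 = \<eta>^2" .
  then show ?thesis using normal_fourth[OF xi_distr sqrt_eta] by simp
qed

lemma W_tele: "\<omega> \<in> space M \<Longrightarrow> coord W1 W2 b (real k * \<eta>) \<omega> = (\<Sum>l<k. xi l b \<omega>)"
  by (induction k) (auto simp: W_zero xi_def)

lemma past_meas[measurable]: "past i \<in> measurable M (PiM ({..<i}\<times>UNIV) (\<lambda>_. borel))"
  unfolding past_def by measurable

lemma adapted_meas: assumes "adapted i G" shows "G \<in> borel_measurable M"
proof -
  obtain g where g: "g \<in> borel_measurable (PiM ({..<i}\<times>(UNIV::bool set)) (\<lambda>_. borel))"
    and e: "\<forall>\<omega>\<in>space M. G \<omega> = g (past i \<omega>)" using assms(1) unfolding adapted_def by blast
  have "(\<lambda>\<omega>. g (past i \<omega>)) \<in> borel_measurable M" using g by measurable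
  then show ?thesis using e by (subst measurable_cong[where g="\<lambda>\<omega>. g (past i \<omega>)"]) auto
qed

lemma adapted_fun:
  assumes "adapted i F" "f \<in> borel_measurable borel"
  shows "adapted i (\<lambda>\<omega>. f (F \<omega>))"
proof -
  obtain g where g: "g \<in> borel_measurable (PiM ({..<i}\<times>(UNIV::bool set)) (\<lambda>_. borel))"
    and e: "\<forall>\<omega>\<in>space M. F \<omega> = g (past i \<omega>)" using assms(1) unfolding adapted_def by blast
  have "(\<lambda>x. f (g x)) \<in> borel_measurable (PiM ({..<i}\<times>(UNIV::bool set)) (\<lambda>_. borel))"
    using measurable_comp[OF g assms(2)] by (simp add: o_def)
  then show ?thesis unfolding adapted_def
    by (rule bexI[rotated]) (use e in simp)
qed

lemma adapted_bin:
  assumes "adapted i F" "adapted i G" "(\<lambda>p. h (fst p) (snd p)) \<in> borel_measurable (borel \<Otimes>\<^sub>M borel)"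
  shows "adapted i (\<lambda>\<omega>. h (F \<omega>) (G \<omega>))"
proof -
  obtain f where f: "f \<in> borel_measurable (PiM ({..<i}\<times>(UNIV::bool set)) (\<lambda>_. borel))"
    and ef: "\<forall>\<omega>\<in>space M. F \<omega> = f (past i \<omega>)" using assms(1) unfolding adapted_def by blast
  obtain g where g: "g \<in> borel_measurable (PiM ({..<i}\<times>(UNIV::bool set)) (\<lambda>_. borel))"
    and eg: "\<forall>\<omega>\<in>space M. G \<omega> = g (past i \<omega>)" using assms(2) unfolding adapted_def by blast
  have "(\<lambda>x. h (f x) (g x)) \<in> borel_measurable (PiM ({..<i}\<times>(UNIV::bool set)) (\<lambda>_. borel))"
    using measurable_comp[OF measurable_Pair[OF f g] assms(3)] by (simp add: o_def)
  then show ?thesis unfolding adapted_def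
    by (rule bexI[rotated]) (use ef eg in simp)
qed

lemma adapted_const: "adapted i (\<lambda>\<omega>. c)"
  unfolding adapted_def by (rule bexI[of _ "\<lambda>x. c"]) simp_all

lemma adapted_add: "adapted i F \<Longrightarrow> adapted i G \<Longrightarrow> adapted i (\<lambda>\<omega>. F \<omega> + G \<omega>)"
  using adapted_bin[where h="(+)" and F=F and G=G and i=i] by simp

lemma adapted_diff: "adapted i F \<Longrightarrow> adapted i G \<Longrightarrow> adapted i (\<lambda>\<omega>. F \<omega> - G \<omega>)"
  using adapted_bin[where h="(-)" and F=F and G=G and i=i] by simp

lemma adapted_mult: "adapted i F \<Longrightarrow> adapted i G \<Longrightarrow> adapted i (\<lambda>\<omega>. F \<omega> * G \<omega>)"
  using adapted_bin[where h="(*)" and F=F and G=G and i=i] by simp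

lemma adapted_sum: "finite I \<Longrightarrow> (\<And>l. l \<in> I \<Longrightarrow> adapted i (F l)) \<Longrightarrow> adapted i (\<lambda>\<omega>. \<Sum>l\<in>I. F l \<omega>)"
  by (induction I rule: finite_induct) (auto intro: adapted_add adapted_const)

lemma adapted_prod: "finite I \<Longrightarrow> (\<And>l. l \<in> I \<Longrightarrow> adapted i (F l)) \<Longrightarrow> adapted i (\<lambda>\<omega>. \<Prod>l\<in>I. F l \<omega>)"
  by (induction I rule: finite_induct) (auto intro: adapted_mult adapted_const)

lemma adapted_mono:
  assumes "adapted i G" "i \<le> j" shows "adapted j G"
proof -
  obtain g where g: "g \<in> borel_measurable (PiM ({..<i}\<times>(UNIV::bool set)) (\<lambda>_. borel))"
    and e: "\<forall>\<omega>\<in>space M. G \<omega> = g (past i \<omega>)" using assms(1) unfolding adapted_def by blast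
  have sub: "{..<i}\<times>(UNIV::bool set) \<subseteq> {..<j}\<times>UNIV" using assms(2) by auto
  have m: "(\<lambda>x. g (restrict x ({..<i}\<times>UNIV))) \<in> borel_measurable (PiM ({..<j}\<times>(UNIV::bool set)) (\<lambda>_. borel))"
    using measurable_comp[OF measurable_restrict_subset[OF sub] g] by (simp add: o_def)
  have "past i \<omega> = restrict (past j \<omega>) ({..<i}\<times>UNIV)" for \<omega>
    using sub by (auto simp: past_def fun_eq_iff)
  then show ?thesis unfolding adapted_def
    by (intro bexI[OF _ m]) (use e in simp)
qed

lemma adapted_xi: assumes "l < i" shows "adapted i (xi l b)"
  unfolding adapted_def
proof (rule bexI[of _ "\<lambda>x. x (l, b)"])
  show "\<forall>\<omega>\<in>space M. xi l b \<omega> = past i \<omega> (l, b)" using assms by (auto simp: past_def)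
qed (use assms in auto)

lemma adapted_W: "adapted k (coord W1 W2 b (real k * \<eta>))"
proof -
  have "adapted k (\<lambda>\<omega>. \<Sum>l<k. xi l b \<omega>)" by (intro adapted_sum adapted_xi) auto
  then obtain g where g: "g \<in> borel_measurable (PiM ({..<k}\<times>(UNIV::bool set)) (\<lambda>_. borel))"
    and e: "\<forall>\<omega>\<in>space M. (\<Sum>l<k. xi l b \<omega>) = g (past k \<omega>)" unfolding adapted_def by blast
  show ?thesis unfolding adapted_def
    by (rule bexI[OF _ g]) (use e W_tele in simp)
qed

lemma indep_past:
  "indep_var (PiM ({..<i}\<times>UNIV) (\<lambda>_. borel)) (past i)
             (PiM ({i}\<times>UNIV) (\<lambda>_. borel)) (\<lambda>\<omega>. restrict (\<lambda>p. xi (fst p) (snd p) \<omega>) ({i}\<times>UNIV))"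
  unfolding past_def
  by (rule indep_var_restrict[OF indep_xi[of "Suc i"]]) auto

lemma orth:
  assumes "adapted i G" "mom M G" "f \<in> borel_measurable borel" "mom M (\<lambda>\<omega>. f (xi i b \<omega>))"
  shows "expectation (\<lambda>\<omega>. G \<omega> * f (xi i b \<omega>)) = expectation G * expectation (\<lambda>\<omega>. f (xi i b \<omega>))"
proof -
  obtain g where g: "g \<in> borel_measurable (PiM ({..<i}\<times>(UNIV::bool set)) (\<lambda>_. borel))"
    and e: "\<forall>\<omega>\<in>space M. G \<omega> = g (past i \<omega>)" using assms(1) unfolding adapted_def by blast
  have fm: "(\<lambda>x. f (x (i, b))) \<in> borel_measurable (PiM ({i}\<times>(UNIV::bool set)) (\<lambda>_. borel))"
    using assms(3) by measurable
  have ind: "indep_var borel (g \<circ> past i) borel ((\<lambda>x. f (x (i, b))) \<circ> (\<lambda>\<omega>. restrict (\<lambda>p. xi (fst p) (snd p) \<omega>) ({i}\<times>UNIV)))"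
    by (rule indep_var_compose[OF indep_past g fm])
  have eq2: "((\<lambda>x. f (x (i, b))) \<circ> (\<lambda>\<omega>. restrict (\<lambda>p. xi (fst p) (snd p) \<omega>) ({i}\<times>UNIV))) = (\<lambda>\<omega>. f (xi i b \<omega>))"
    by (auto simp: fun_eq_iff)
  have ind': "indep_var borel (\<lambda>\<omega>. g (past i \<omega>)) borel (\<lambda>\<omega>. f (xi i b \<omega>))"
    using ind unfolding eq2 by (simp add: o_def)
  have ig: "integrable M (\<lambda>\<omega>. g (past i \<omega>))"
  proof -
    have "integrable M G \<longleftrightarrow> integrable M (\<lambda>\<omega>. g (past i \<omega>))"
      by (rule Bochner_Integration.integrable_cong) (use e in auto)
    then show ?thesis using mom_int[OF assms(2)] by simp
  qed
  have "expectation (\<lambda>\<omega>. G \<omega> * f (xi i b \<omega>)) = expectation (\<lambda>\<omega>. g (past i \<omega>) * f (xi i b \<omega>))"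
    using e by (intro Bochner_Integration.integral_cong) auto
  also have "\<dots> = expectation (\<lambda>\<omega>. g (past i \<omega>)) * expectation (\<lambda>\<omega>. f (xi i b \<omega>))"
    by (rule indep_var_lebesgue_integral[OF ind' ig mom_int[OF assms(4)]])
  also have "expectation (\<lambda>\<omega>. g (past i \<omega>)) = expectation G"
    using e by (intro Bochner_Integration.integral_cong) auto
  finally show ?thesis .
qed

end

context hgrid
begin

lemma mom_pow: "mom M X \<Longrightarrow> mom M (\<lambda>\<omega>. X \<omega> ^ n)"
  by (induction n) (auto intro: mom_mult mom_const)

definition mdiff :: "nat \<Rightarrow> ('a \<Rightarrow> real) \<Rightarrow> bool" where
  "mdiff i D \<longleftrightarrow> adapted (Suc i) D \<and> mom M D \<and>
     (\<forall>G. adapted i G \<and> mom M G \<longrightarrow> expectation (\<lambda>\<omega>. G \<omega> * D \<omega>) = 0)"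

lemma mdiff_orth: "mdiff i D \<Longrightarrow> adapted i G \<Longrightarrow> mom M G \<Longrightarrow> expectation (\<lambda>\<omega>. G \<omega> * D \<omega>) = 0"
  unfolding mdiff_def by blast

lemma mdiff_mom: "mdiff i D \<Longrightarrow> mom M D"
  unfolding mdiff_def by blast

lemma mdiff_adapted: "mdiff i D \<Longrightarrow> adapted (Suc i) D"
  unfolding mdiff_def by blast

lemma mdiff_xi:
  assumes "adapted i H" "mom M H"
  shows "mdiff i (\<lambda>\<omega>. H \<omega> * xi i b \<omega>)"
  unfolding mdiff_def
proof (intro conjI allI impI)
  show "adapted (Suc i) (\<lambda>\<omega>. H \<omega> * xi i b \<omega>)"
    by (intro adapted_mult adapted_mono[OF assms(1)] adapted_xi) auto
  show "mom M (\<lambda>\<omega>. H \<omega> * xi i b \<omega>)" by (intro mom_mult assms xi_mom)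
  fix G assume G: "adapted i G \<and> mom M G"
  have "expectation (\<lambda>\<omega>. G \<omega> * (H \<omega> * xi i b \<omega>)) = expectation (\<lambda>\<omega>. (G \<omega> * H \<omega>) * xi i b \<omega>)"
    by (simp add: mult.assoc)
  also have "\<dots> = expectation (\<lambda>\<omega>. G \<omega> * H \<omega>) * expectation (xi i b)"
    using orth[where f="\<lambda>x. x" and G="\<lambda>\<omega>. G \<omega> * H \<omega>" and i=i and b=b] G assms
    by (simp add: adapted_mult mom_mult xi_mom)
  also have "\<dots> = 0" by (simp add: xi_mean)
  finally show "expectation (\<lambda>\<omega>. G \<omega> * (H \<omega> * xi i b \<omega>)) = 0" .
qed

lemma mdiff_xi2:
  assumes "adapted i H" "mom M H"
  shows "mdiff i (\<lambda>\<omega>. H \<omega> * (xi i b \<omega> ^ 2 - \<eta>))"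
  unfolding mdiff_def
proof (intro conjI allI impI)
  show "adapted (Suc i) (\<lambda>\<omega>. H \<omega> * (xi i b \<omega> ^ 2 - \<eta>))"
    by (intro adapted_mult adapted_mono[OF assms(1)] adapted_diff adapted_const adapted_fun[where f="\<lambda>x. x^2"] adapted_xi) auto
  have m: "mom M (\<lambda>\<omega>. xi i b \<omega> ^ 2 - \<eta>)" by (intro mom_diff mom_pow mom_const xi_mom)
  show "mom M (\<lambda>\<omega>. H \<omega> * (xi i b \<omega> ^ 2 - \<eta>))" by (intro mom_mult assms m)
  fix G assume G: "adapted i G \<and> mom M G"
  have "expectation (\<lambda>\<omega>. G \<omega> * (H \<omega> * (xi i b \<omega> ^ 2 - \<eta>))) = expectation (\<lambda>\<omega>. (G \<omega> * H \<omega>) * (xi i b \<omega> ^ 2 - \<eta>))"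
    by (simp add: mult.assoc)
  also have "\<dots> = expectation (\<lambda>\<omega>. G \<omega> * H \<omega>) * expectation (\<lambda>\<omega>. xi i b \<omega> ^ 2 - \<eta>)"
    using orth[where f="\<lambda>x. x^2 - \<eta>" and G="\<lambda>\<omega>. G \<omega> * H \<omega>" and i=i and b=b] G assms m
    by (simp add: adapted_mult mom_mult)
  also have "expectation (\<lambda>\<omega>. xi i b \<omega> ^ 2 - \<eta>) = 0"
    using xi_sq[of i b] mom_int[OF mom_pow[OF xi_mom[of i b], of 2]]
    by (simp add: Bochner_Integration.integral_diff prob_space)
  finally show "expectation (\<lambda>\<omega>. G \<omega> * (H \<omega> * (xi i b \<omega> ^ 2 - \<eta>))) = 0" by simp
qed

lemma mdiff_add:
  assumes "mdiff i D1" "mdiff i D2" shows "mdiff i (\<lambda>\<omega>. D1 \<omega> + D2 \<omega>)"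
  unfolding mdiff_def
proof (intro conjI allI impI)
  show "adapted (Suc i) (\<lambda>\<omega>. D1 \<omega> + D2 \<omega>)" using assms by (intro adapted_add mdiff_adapted)
  show "mom M (\<lambda>\<omega>. D1 \<omega> + D2 \<omega>)" using assms by (intro mom_add mdiff_mom)
  fix G assume G: "adapted i G \<and> mom M G"
  have "expectation (\<lambda>\<omega>. G \<omega> * (D1 \<omega> + D2 \<omega>)) = expectation (\<lambda>\<omega>. G \<omega> * D1 \<omega> + G \<omega> * D2 \<omega>)"
    by (simp add: distrib_left)
  also have "\<dots> = expectation (\<lambda>\<omega>. G \<omega> * D1 \<omega>) + expectation (\<lambda>\<omega>. G \<omega> * D2 \<omega>)"
    using G mdiff_mom[OF assms(1)] mdiff_mom[OF assms(2)]
    by (intro Bochner_Integration.integral_add mom_int mom_mult) auto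
  also have "\<dots> = 0" using G assms by (simp add: mdiff_orth)
  finally show "expectation (\<lambda>\<omega>. G \<omega> * (D1 \<omega> + D2 \<omega>)) = 0" .
qed

lemma mdiff_scale:
  assumes "mdiff i D" shows "mdiff i (\<lambda>\<omega>. c * D \<omega>)"
  unfolding mdiff_def
proof (intro conjI allI impI)
  show "adapted (Suc i) (\<lambda>\<omega>. c * D \<omega>)" using assms by (intro adapted_mult adapted_const mdiff_adapted)
  show "mom M (\<lambda>\<omega>. c * D \<omega>)" using assms by (intro mom_scale mdiff_mom)
  fix G assume G: "adapted i G \<and> mom M G"
  have "expectation (\<lambda>\<omega>. G \<omega> * (c * D \<omega>)) = c * expectation (\<lambda>\<omega>. G \<omega> * D \<omega>)"
    by (simp add: ac_simps)
  also have "\<dots> = 0" using G assms by (simp add: mdiff_orth)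
  finally show "expectation (\<lambda>\<omega>. G \<omega> * (c * D \<omega>)) = 0" .
qed

lemma mdiff_diff:
  assumes "mdiff i D1" "mdiff i D2" shows "mdiff i (\<lambda>\<omega>. D1 \<omega> - D2 \<omega>)"
  using mdiff_add[OF assms(1) mdiff_scale[OF assms(2), of "-1"]] by simp

lemma mdiff_zero: "mdiff i (\<lambda>\<omega>. 0)"
  unfolding mdiff_def by (auto intro: adapted_const mom_const)

lemma S_adapted:
  assumes "\<And>i. mdiff i (D i)" "k \<le> j"
  shows "adapted j (\<lambda>\<omega>. \<Sum>i<k. D i \<omega>)"
  using assms by (intro adapted_sum adapted_mono[OF mdiff_adapted]) auto

lemma S_mom:
  assumes "\<And>i. mdiff i (D i)"
  shows "mom M (\<lambda>\<omega>. \<Sum>i\<in>I. D i \<omega>)"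
  by (cases "finite I") (use assms in \<open>auto intro: mom_sum' mdiff_mom mom_const\<close>)

lemma pythagoras:
  assumes "\<And>i. mdiff i (D i)"
  shows "expectation (\<lambda>\<omega>. (\<Sum>i<n. D i \<omega>)^2) = (\<Sum>i<n. expectation (\<lambda>\<omega>. D i \<omega> ^ 2))"
proof (induction n)
  case 0 then show ?case by simp
next
  case (Suc n)
  let ?S = "\<lambda>\<omega>. \<Sum>i<n. D i \<omega>"
  have mS: "mom M ?S" by (rule S_mom[OF assms])
  have mD: "mom M (D n)" by (rule mdiff_mom[OF assms])
  have "expectation (\<lambda>\<omega>. (\<Sum>i<Suc n. D i \<omega>)^2) = expectation (\<lambda>\<omega>. ?S \<omega>^2 + 2 * (?S \<omega> * D n \<omega>) + D n \<omega>^2)"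
    by (intro Bochner_Integration.integral_cong refl) (simp add: power2_eq_square algebra_simps)
  also have "\<dots> = expectation (\<lambda>\<omega>. ?S \<omega>^2) + 2 * expectation (\<lambda>\<omega>. ?S \<omega> * D n \<omega>) + expectation (\<lambda>\<omega>. D n \<omega>^2)"
    using mS mD by (simp add: mom_int mom_mult mom_pow)
  also have "expectation (\<lambda>\<omega>. ?S \<omega> * D n \<omega>) = 0"
    by (rule mdiff_orth[OF assms S_adapted[OF assms] mS]) simp
  finally show ?case using Suc by simp
qed


lemma ind_fun_meas1: "(\<lambda>x::real. if a \<le> \<bar>x\<bar> then 1 else 0 :: real) \<in> borel_measurable borel"
  by measurable

lemma ind_fun_meas2: "(\<lambda>x::real. if \<bar>x\<bar> < a then 1 else 0 :: real) \<in> borel_measurable borel"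
  by measurable

lemma kolmogorov:
  assumes md: "\<And>i. mdiff i (D i)" and a: "0 < a"
  shows "measure M {\<omega>\<in>space M. \<exists>k\<le>n. a \<le> \<bar>\<Sum>i<k. D i \<omega>\<bar>}
           \<le> expectation (\<lambda>\<omega>. (\<Sum>i<n. D i \<omega>)^2) / a^2"
proof -
  define S where "S k \<omega> = (\<Sum>i<k. D i \<omega>)" for k \<omega>
  define I where "I k \<omega> = (if a \<le> \<bar>S k \<omega>\<bar> then 1 else 0) * (\<Prod>l<k. (if \<bar>S l \<omega>\<bar> < a then 1 else 0 :: real))" for k \<omega>
  have [measurable]: "D i \<in> borel_measurable M" for i using mdiff_mom[OF md] by (rule mom_meas)
  have Smeas[measurable]: "S k \<in> borel_measurable M" for k unfolding S_def by measurable
  have Sad: "adapted j (S k)" if "k \<le> j" for k j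
    unfolding S_def[abs_def] by (rule S_adapted[OF md that])
  have Smom: "mom M (S k)" for k unfolding S_def[abs_def] by (rule S_mom[OF md])
  have Iad: "adapted k (I k)" for k
    unfolding I_def[abs_def]
    by (intro adapted_mult adapted_prod adapted_fun[OF Sad] ind_fun_meas1 ind_fun_meas2) auto
  have P01: "(\<Prod>l<k. (if \<bar>S l \<omega>\<bar> < a then 1 else 0 :: real)) = (if \<forall>l<k. \<bar>S l \<omega>\<bar> < a then 1 else 0)" for k \<omega>
  proof (cases "\<forall>l<k. \<bar>S l \<omega>\<bar> < a")
    case False
    then obtain l where "l < k" "\<not> \<bar>S l \<omega>\<bar> < a" by auto
    then have "(\<Prod>l<k. (if \<bar>S l \<omega>\<bar> < a then 1 else 0 :: real)) = 0" by (intro prod_zero) auto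
    then show ?thesis using False by simp
  qed simp
  have Ialt: "I k \<omega> = (if a \<le> \<bar>S k \<omega>\<bar> \<and> (\<forall>l<k. \<bar>S l \<omega>\<bar> < a) then 1 else 0)" for k \<omega>
    unfolding I_def P01 by simp
  have I01: "I k \<omega> = 0 \<or> I k \<omega> = 1" for k \<omega>
    unfolding Ialt by auto
  have Ige: "0 \<le> I k \<omega>" for k \<omega> using I01[of k \<omega>] by auto
  have Imom: "mom M (I k)" for k
    by (rule mom_bounded[OF adapted_meas[OF Iad], of _ 1]) (use I01 in \<open>metis abs_one abs_zero order_refl zero_le_one\<close>)
  let ?E = "{\<omega>\<in>space M. \<exists>k\<le>n. a \<le> \<bar>S k \<omega>\<bar>}"
  have Emeas: "?E \<in> sets M" by measurable
  have sumI: "(\<Sum>k\<le>n. I k \<omega>) = indicator ?E \<omega>" if "\<omega> \<in> space M" for \<omega>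
  proof (cases "\<exists>k\<le>n. a \<le> \<bar>S k \<omega>\<bar>")
    case False
    then have "I k \<omega> = 0" if "k \<le> n" for k using that unfolding Ialt by auto
    then show ?thesis using False by (simp add: indicator_def)
  next
    case True
    define k0 where "k0 = (LEAST k. a \<le> \<bar>S k \<omega>\<bar>)"
    have k0: "a \<le> \<bar>S k0 \<omega>\<bar>" unfolding k0_def using True by (auto intro: LeastI)
    have k0n: "k0 \<le> n" unfolding k0_def using True by (auto intro: Least_le order.trans)
    have lt: "\<bar>S l \<omega>\<bar> < a" if "l < k0" for l
      using not_less_Least[OF that[unfolded k0_def]] by simp
    have Ik0: "I k0 \<omega> = 1" unfolding Ialt using k0 lt by simp
    have Ik: "I k \<omega> = 0" if "k \<noteq> k0" for k
    proof (cases "k < k0")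
      case True then show ?thesis unfolding Ialt using lt[OF True] by auto
    next
      case False
      with that have "k0 < k" by simp
      then show ?thesis unfolding Ialt using k0 by auto
    qed
    have "(\<Sum>k\<le>n. I k \<omega>) = I k0 \<omega> + (\<Sum>k\<in>{..n}-{k0}. I k \<omega>)"
      by (rule sum.remove) (use k0n in auto)
    also have "(\<Sum>k\<in>{..n}-{k0}. I k \<omega>) = 0"
      by (rule sum.neutral) (use Ik in auto)
    finally have "(\<Sum>k\<le>n. I k \<omega>) = I k0 \<omega>" by simp
    then show ?thesis using True Ik0 that by (simp add: indicator_def)
  qed
  have key: "a^2 * expectation (I k) \<le> expectation (\<lambda>\<omega>. S n \<omega>^2 * I k \<omega>)" if kn: "k \<le> n" for k
  proof -
    define R where "R \<omega> = (\<Sum>i\<in>{k..<n}. D i \<omega>)" for \<omega>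
    have un: "{..<n} = {..<k} \<union> {k..<n}" using kn by auto
    have SnR: "S n \<omega> = S k \<omega> + R \<omega>" for \<omega>
      unfolding S_def R_def un by (subst sum.union_disjoint) auto
    have Rmom: "mom M R" unfolding R_def[abs_def] by (rule S_mom[OF md])
    have Gad: "adapted i (\<lambda>\<omega>. S k \<omega> * I k \<omega>)" if "k \<le> i" for i
      by (intro adapted_mono[OF _ that] adapted_mult Sad Iad) simp
    have Gmom: "mom M (\<lambda>\<omega>. S k \<omega> * I k \<omega>)" by (intro mom_mult Smom Imom)
    have cross: "expectation (\<lambda>\<omega>. (S k \<omega> * I k \<omega>) * R \<omega>) = 0"
    proof -
      have "expectation (\<lambda>\<omega>. (S k \<omega> * I k \<omega>) * R \<omega>) = expectation (\<lambda>\<omega>. \<Sum>i\<in>{k..<n}. (S k \<omega> * I k \<omega>) * D i \<omega>)"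
        unfolding R_def by (simp add: sum_distrib_left)
      also have "\<dots> = (\<Sum>i\<in>{k..<n}. expectation (\<lambda>\<omega>. (S k \<omega> * I k \<omega>) * D i \<omega>))"
        by (intro Bochner_Integration.integral_sum mom_int mom_mult Gmom mdiff_mom[OF md])
      also have "\<dots> = 0"
        by (intro sum.neutral ballI mdiff_orth[OF md Gad Gmom]) auto
      finally show ?thesis .
    qed
    have "expectation (\<lambda>\<omega>. S n \<omega>^2 * I k \<omega>) = expectation (\<lambda>\<omega>. S k \<omega>^2 * I k \<omega> + R \<omega>^2 * I k \<omega> + 2 * ((S k \<omega> * I k \<omega>) * R \<omega>))"
      by (intro Bochner_Integration.integral_cong refl) (simp add: SnR power2_eq_square algebra_simps)
    also have "\<dots> = expectation (\<lambda>\<omega>. S k \<omega>^2 * I k \<omega>) + expectation (\<lambda>\<omega>. R \<omega>^2 * I k \<omega>) + 2 * expectation (\<lambda>\<omega>. (S k \<omega> * I k \<omega>) * R \<omega>)"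
      using Smom Imom Rmom Gmom by (simp add: mom_int mom_mult mom_pow)
    finally have eq: "expectation (\<lambda>\<omega>. S n \<omega>^2 * I k \<omega>) = expectation (\<lambda>\<omega>. S k \<omega>^2 * I k \<omega>) + expectation (\<lambda>\<omega>. R \<omega>^2 * I k \<omega>)"
      using cross by simp
    have nn: "0 \<le> expectation (\<lambda>\<omega>. R \<omega>^2 * I k \<omega>)"
      by (intro Bochner_Integration.integral_nonneg mult_nonneg_nonneg Ige) auto
    have "a^2 * expectation (I k) = expectation (\<lambda>\<omega>. a^2 * I k \<omega>)" by simp
    also have "\<dots> \<le> expectation (\<lambda>\<omega>. S k \<omega>^2 * I k \<omega>)"
    proof (rule Bochner_Integration.integral_mono)
      show "integrable M (\<lambda>\<omega>. a^2 * I k \<omega>)" using Imom by (simp add: mom_int)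
      show "integrable M (\<lambda>\<omega>. S k \<omega>^2 * I k \<omega>)" using Imom Smom by (simp add: mom_int mom_mult mom_pow)
      fix \<omega>
      show "a^2 * I k \<omega> \<le> S k \<omega>^2 * I k \<omega>"
      proof (cases "I k \<omega> = 0")
        case False
        then have "a \<le> \<bar>S k \<omega>\<bar>" unfolding Ialt by (auto split: if_splits)
        then have "a^2 \<le> \<bar>S k \<omega>\<bar>^2" using a by (intro power_mono) auto
        then show ?thesis using Ige[of k \<omega>] by (simp add: mult_right_mono)
      qed simp
    qed
    finally show ?thesis using eq nn by linarith
  qed
  have "a^2 * measure M ?E = a^2 * expectation (indicator ?E)"
    using Emeas by simp
  also have "expectation (indicator ?E) = expectation (\<lambda>\<omega>. \<Sum>k\<le>n. I k \<omega>)"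
    using sumI by (intro Bochner_Integration.integral_cong) auto
  also have "\<dots> = (\<Sum>k\<le>n. expectation (I k))"
    by (intro Bochner_Integration.integral_sum mom_int Imom)
  also have "a^2 * \<dots> = (\<Sum>k\<le>n. a^2 * expectation (I k))" by (simp add: sum_distrib_left)
  also have "\<dots> \<le> (\<Sum>k\<le>n. expectation (\<lambda>\<omega>. S n \<omega>^2 * I k \<omega>))"
    by (intro sum_mono key) simp
  also have "\<dots> = expectation (\<lambda>\<omega>. \<Sum>k\<le>n. S n \<omega>^2 * I k \<omega>)"
    by (intro Bochner_Integration.integral_sum[symmetric] mom_int mom_mult mom_pow Smom Imom)
  also have "\<dots> = expectation (\<lambda>\<omega>. S n \<omega>^2 * indicator ?E \<omega>)"
    using sumI by (intro Bochner_Integration.integral_cong) (auto simp flip: sum_distrib_left)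
  also have "\<dots> \<le> expectation (\<lambda>\<omega>. S n \<omega>^2)"
  proof (rule Bochner_Integration.integral_mono)
    show "integrable M (\<lambda>\<omega>. S n \<omega>^2 * indicator ?E \<omega>)"
      using Smom Emeas by (intro integrable_real_mult_indicator) (simp_all add: mom_int mom_pow)
    show "integrable M (\<lambda>\<omega>. S n \<omega>^2)" using Smom by (simp add: mom_int mom_pow)
  qed (auto simp: indicator_def)
  finally have "a^2 * measure M ?E \<le> expectation (\<lambda>\<omega>. S n \<omega>^2)" .
  then show ?thesis using a unfolding S_def by (simp add: pos_le_divide_eq mult.commute)
qed

end

context hgrid
begin

abbreviation Wg :: "bool \<Rightarrow> nat \<Rightarrow> 'a \<Rightarrow> real" where
  "Wg b k \<equiv> coord W1 W2 b (real k * \<eta>)"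

lemma mom_cong: assumes "mom M X" "\<And>\<omega>. \<omega> \<in> space M \<Longrightarrow> X \<omega> = Y \<omega>" "Y \<in> borel_measurable M"
  shows "mom M Y"
  unfolding mom_def
proof (intro conjI allI assms(3))
  fix p :: nat
  have "integrable M (\<lambda>\<omega>. \<bar>X \<omega>\<bar> ^ p) \<longleftrightarrow> integrable M (\<lambda>\<omega>. \<bar>Y \<omega>\<bar> ^ p)"
    by (rule Bochner_Integration.integrable_cong) (use assms(2) in auto)
  then show "integrable M (\<lambda>\<omega>. \<bar>Y \<omega>\<bar> ^ p)" using mom_int_abs[OF assms(1)] by simp
qed

lemma W_mom: "mom M (Wg b k)"
  by (rule mom_cong[OF mom_sum'[of "{..<k}" "\<lambda>l. xi l b"]]) (auto simp: xi_mom W_tele)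

lemma xi_step: "Wg b (Suc k) \<omega> = Wg b k \<omega> + xi k b \<omega>"
  by (simp add: xi_def)

lemma mdiff_xi1: "mdiff i (\<lambda>\<omega>. c * xi i b \<omega>)"
  using mdiff_xi[OF adapted_const mom_const, of i c b] by simp

lemma E_incr:
  assumes "l \<le> j"
  shows "expectation (\<lambda>\<omega>. (Wg b j \<omega> - Wg b l \<omega>)^2) = real (j - l) * \<eta>"
proof -
  define D where "D i \<omega> = (if l \<le> i then 1 else 0) * xi i b \<omega>" for i \<omega>
  have md: "mdiff i (D i)" for i unfolding D_def[abs_def] by (rule mdiff_xi1)
  have un: "{..<j} = {..<l} \<union> {l..<j}" using assms by auto
  have e1: "(\<Sum>i<j. D i \<omega>) = Wg b j \<omega> - Wg b l \<omega>" if "\<omega> \<in> space M" for \<omega>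
  proof -
    have "(\<Sum>i<j. D i \<omega>) = (\<Sum>i\<in>{l..<j}. xi i b \<omega>)"
      unfolding un D_def by (subst sum.union_disjoint) auto
    also have "\<dots> = (\<Sum>i<j. xi i b \<omega>) - (\<Sum>i<l. xi i b \<omega>)"
      unfolding un by (subst sum.union_disjoint) auto
    finally show ?thesis using that by (simp add: W_tele)
  qed
  have "expectation (\<lambda>\<omega>. (Wg b j \<omega> - Wg b l \<omega>)^2) = expectation (\<lambda>\<omega>. (\<Sum>i<j. D i \<omega>)^2)"
    using e1 by (intro Bochner_Integration.integral_cong) auto
  also have "\<dots> = (\<Sum>i<j. expectation (\<lambda>\<omega>. D i \<omega> ^ 2))" by (rule pythagoras[OF md])
  also have "\<dots> = (\<Sum>i<j. if l \<le> i then \<eta> else 0)"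
    by (intro sum.cong refl) (simp add: D_def xi_sq power_mult_distrib)
  also have "\<dots> = (\<Sum>i\<in>{l..<j}. \<eta>)"
    unfolding un by (subst sum.union_disjoint) auto
  finally show ?thesis using assms by simp
qed

lemma E_W2: "expectation (\<lambda>\<omega>. (Wg b k \<omega>)^2) = real k * \<eta>"
proof -
  have "expectation (\<lambda>\<omega>. (Wg b k \<omega>)^2) = expectation (\<lambda>\<omega>. (Wg b k \<omega> - Wg b 0 \<omega>)^2)"
    by (intro Bochner_Integration.integral_cong) (auto simp: W_zero)
  then show ?thesis using E_incr[of 0 k b] by simp
qed

lemma E_mult_xi2:
  assumes "adapted i H" "mom M H"
  shows "expectation (\<lambda>\<omega>. (H \<omega> * xi i b \<omega>)^2) = expectation (\<lambda>\<omega>. H \<omega>^2) * \<eta>"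
proof -
  have "expectation (\<lambda>\<omega>. (H \<omega> * xi i b \<omega>)^2) = expectation (\<lambda>\<omega>. H \<omega>^2 * (\<lambda>x. x^2) (xi i b \<omega>))"
    by (simp add: power_mult_distrib)
  also have "\<dots> = expectation (\<lambda>\<omega>. H \<omega>^2) * expectation (\<lambda>\<omega>. xi i b \<omega>^2)"
    by (rule orth) (use assms in \<open>auto intro: adapted_fun[where f="\<lambda>x. x^2"] mom_pow xi_mom\<close>)
  finally show ?thesis by (simp add: xi_sq)
qed

lemma E_xi2c: "expectation (\<lambda>\<omega>. (xi i b \<omega>^2 - \<eta>)^2) = 2 * \<eta>^2"
proof -
  have "expectation (\<lambda>\<omega>. (xi i b \<omega>^2 - \<eta>)^2) = expectation (\<lambda>\<omega>. xi i b \<omega>^4 - 2 * \<eta> * xi i b \<omega>^2 + \<eta>^2)"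
    by (intro Bochner_Integration.integral_cong refl) (simp add: power2_eq_square algebra_simps power_numeral_reduce)
  also have "\<dots> = expectation (\<lambda>\<omega>. xi i b \<omega>^4) - 2 * \<eta> * expectation (\<lambda>\<omega>. xi i b \<omega>^2) + \<eta>^2"
    using mom_int[OF mom_pow[OF xi_mom[of i b]]] by (simp add: prob_space)
  also have "\<dots> = 3 * \<eta>^2 - 2 * \<eta> * \<eta> + \<eta>^2" by (simp add: xi_sq xi_four)
  finally show ?thesis by (simp add: power2_eq_square)
qed


definition Dw :: "nat \<Rightarrow> 'a \<Rightarrow> real" where
  "Dw i \<omega> = (2 * Wg False i \<omega> * xi i False \<omega> + (xi i False \<omega>^2 - \<eta>)) +
              (2 * Wg True i \<omega> * xi i True \<omega> + (xi i True \<omega>^2 - \<eta>))"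

lemma mdiff_Wx: "mdiff i (\<lambda>\<omega>. 2 * Wg b i \<omega> * xi i b \<omega>)"
  using mdiff_xi[of i "\<lambda>\<omega>. 2 * Wg b i \<omega>" b]
  by (simp add: adapted_mult adapted_const adapted_W mom_scale W_mom)

lemma mdiff_x2: "mdiff i (\<lambda>\<omega>. xi i b \<omega>^2 - \<eta>)"
  using mdiff_xi2[OF adapted_const mom_const, of i 1 b] by simp

lemma mdiff_Dw: "mdiff i (Dw i)"
  unfolding Dw_def[abs_def] by (intro mdiff_add mdiff_Wx mdiff_x2)

lemma Dw_sum: "\<omega> \<in> space M \<Longrightarrow> (\<Sum>i<k. Dw i \<omega>) = Wg False k \<omega>^2 + Wg True k \<omega>^2 - 2 * real k * \<eta>"
proof (induction k)
  case 0 then show ?case by (simp add: W_zero)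
next
  case (Suc k)
  have "(\<Sum>i<Suc k. Dw i \<omega>) = (\<Sum>i<k. Dw i \<omega>) + Dw k \<omega>" by simp
  also have "\<dots> = Wg False k \<omega>^2 + Wg True k \<omega>^2 - 2 * real k * \<eta> + Dw k \<omega>" using Suc by simp
  also have "\<dots> = Wg False (Suc k) \<omega>^2 + Wg True (Suc k) \<omega>^2 - 2 * real (Suc k) * \<eta>"
    unfolding xi_step Dw_def by (simp add: power2_eq_square algebra_simps)
  finally show ?case .
qed

lemma E_Wx2: "expectation (\<lambda>\<omega>. (2 * Wg b i \<omega> * xi i b \<omega>)^2) = 4 * real i * \<eta> * \<eta>"
proof -
  have "expectation (\<lambda>\<omega>. ((2 * Wg b i \<omega>) * xi i b \<omega>)^2) = expectation (\<lambda>\<omega>. (2 * Wg b i \<omega>)^2) * \<eta>"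
    by (rule E_mult_xi2) (auto intro: adapted_mult adapted_const adapted_W mom_scale W_mom)
  also have "expectation (\<lambda>\<omega>. (2 * Wg b i \<omega>)^2) = 4 * expectation (\<lambda>\<omega>. (Wg b i \<omega>)^2)"
    by (simp add: power_mult_distrib)
  finally show ?thesis by (simp add: E_W2)
qed

lemma E_Dw: "expectation (\<lambda>\<omega>. Dw i \<omega>^2) \<le> 32 * real i * \<eta>^2 + 16 * \<eta>^2"
proof -
  let ?a = "\<lambda>\<omega>. 2 * Wg False i \<omega> * xi i False \<omega>"
  let ?b = "\<lambda>\<omega>. xi i False \<omega>^2 - \<eta>"
  let ?c = "\<lambda>\<omega>. 2 * Wg True i \<omega> * xi i True \<omega>"
  let ?d = "\<lambda>\<omega>. xi i True \<omega>^2 - \<eta>"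
  have ma: "mom M ?a" "mom M ?c" using mdiff_mom[OF mdiff_Wx] by auto
  have mb: "mom M ?b" "mom M ?d" using mdiff_mom[OF mdiff_x2] by auto
  have ineq: "(a + b + (c + d))^2 \<le> 4 * (a^2 + b^2 + c^2 + d^2)" for a b c d :: real
  proof -
    have "0 \<le> (a-b)^2 + (a-c)^2 + (a-d)^2 + (b-c)^2 + (b-d)^2 + (c-d)^2" by simp
    then show ?thesis by (simp add: power2_eq_square algebra_simps)
  qed
  have "expectation (\<lambda>\<omega>. Dw i \<omega>^2) \<le> expectation (\<lambda>\<omega>. 4 * (?a \<omega>^2 + ?b \<omega>^2 + ?c \<omega>^2 + ?d \<omega>^2))"
  proof (rule Bochner_Integration.integral_mono)
    show "integrable M (\<lambda>\<omega>. Dw i \<omega>^2)" using mdiff_mom[OF mdiff_Dw] by (simp add: mom_int mom_pow)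
    show "integrable M (\<lambda>\<omega>. 4 * (?a \<omega>^2 + ?b \<omega>^2 + ?c \<omega>^2 + ?d \<omega>^2))"
      using ma mb by (simp add: mom_int mom_pow)
    fix \<omega> show "Dw i \<omega>^2 \<le> 4 * (?a \<omega>^2 + ?b \<omega>^2 + ?c \<omega>^2 + ?d \<omega>^2)"
      unfolding Dw_def by (rule ineq)
  qed
  also have "\<dots> = 4 * (expectation (\<lambda>\<omega>. ?a \<omega>^2) + expectation (\<lambda>\<omega>. ?b \<omega>^2) + expectation (\<lambda>\<omega>. ?c \<omega>^2) + expectation (\<lambda>\<omega>. ?d \<omega>^2))"
    using ma mb by (simp add: mom_int mom_pow)
  also have "\<dots> = 4 * (4 * real i * \<eta> * \<eta> + 2 * \<eta>^2 + 4 * real i * \<eta> * \<eta> + 2 * \<eta>^2)"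
    by (simp only: E_Wx2 E_xi2c)
  finally show ?thesis by (simp add: power2_eq_square algebra_simps)
qed


lemma Dw_meas[measurable]: "Dw i \<in> borel_measurable M"
  using mdiff_mom[OF mdiff_Dw] by (rule mom_meas)

lemma W_max:
  assumes N: "1 \<le> N" and mu: "2 * real N * \<eta> < \<mu>"
  shows "measure M {\<omega>\<in>space M. \<exists>k\<le>N. \<mu> < Wg False k \<omega>^2 + Wg True k \<omega>^2}
           \<le> 48 * (real N * \<eta>)^2 / (\<mu> - 2 * real N * \<eta>)^2"
proof -
  define c where "c = \<mu> - 2 * real N * \<eta>"
  have c: "0 < c" using mu by (simp add: c_def)
  have sub: "{\<omega>\<in>space M. \<exists>k\<le>N. \<mu> < Wg False k \<omega>^2 + Wg True k \<omega>^2}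
      \<subseteq> {\<omega>\<in>space M. \<exists>k\<le>N. c \<le> \<bar>\<Sum>i<k. Dw i \<omega>\<bar>}"
  proof safe
    fix \<omega> k assume \<omega>: "\<omega> \<in> space M" and k: "k \<le> N" and lt: "\<mu> < Wg False k \<omega>^2 + Wg True k \<omega>^2"
    have "real k * \<eta> \<le> real N * \<eta>" using k eta by (intro mult_right_mono) auto
    then have "c \<le> (\<Sum>i<k. Dw i \<omega>)" using lt Dw_sum[OF \<omega>, of k] by (simp add: c_def)
    then show "\<exists>k\<le>N. c \<le> \<bar>\<Sum>i<k. Dw i \<omega>\<bar>" using k by force
  qed
  have "measure M {\<omega>\<in>space M. \<exists>k\<le>N. \<mu> < Wg False k \<omega>^2 + Wg True k \<omega>^2}
      \<le> measure M {\<omega>\<in>space M. \<exists>k\<le>N. c \<le> \<bar>\<Sum>i<k. Dw i \<omega>\<bar>}"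
    by (rule finite_measure_mono[OF sub]) measurable
  also have "\<dots> \<le> expectation (\<lambda>\<omega>. (\<Sum>i<N. Dw i \<omega>)^2) / c^2"
    by (rule kolmogorov[OF mdiff_Dw c])
  also have "expectation (\<lambda>\<omega>. (\<Sum>i<N. Dw i \<omega>)^2) = (\<Sum>i<N. expectation (\<lambda>\<omega>. Dw i \<omega>^2))"
    by (rule pythagoras[OF mdiff_Dw])
  also have "\<dots> \<le> (\<Sum>i<N. 48 * real N * \<eta>^2)"
  proof (rule sum_mono)
    fix i assume "i \<in> {..<N}"
    then have "32 * real i + 16 \<le> 48 * real N" using N by simp
    then have "(32 * real i + 16) * \<eta>^2 \<le> (48 * real N) * \<eta>^2" by (intro mult_right_mono) auto
    then show "expectation (\<lambda>\<omega>. Dw i \<omega>^2) \<le> 48 * real N * \<eta>^2"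
      using E_Dw[of i] by (simp add: algebra_simps)
  qed
  also have "(\<Sum>i<N. 48 * real N * \<eta>^2) = 48 * (real N * \<eta>)^2" by (simp add: power2_eq_square)
  finally show ?thesis using c by (simp add: c_def divide_right_mono)
qed

end


lemma sum_blocks:
  fixes g :: "nat \<Rightarrow> nat \<Rightarrow> real"
  shows "(\<Sum>q<Q. \<Sum>r<c. g q (c*q + r)) = (\<Sum>i<c*Q. g (i div c) i)"
proof (cases "c = 0")
  case False
  have "(\<Sum>i<c*Q. g (i div c) i) = (\<Sum>i<Q*c. g (i div c) i)" by (simp add: mult.commute)
  also have "\<dots> = (\<Sum>q<Q. \<Sum>i\<in>{q*c..<q*c+c}. g (i div c) i)"
    by (rule sum.nat_group[symmetric])
  also have "\<dots> = (\<Sum>q<Q. \<Sum>r<c. g q (c*q + r))"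
  proof (rule sum.cong[OF refl])
    fix q
    have "(\<Sum>i\<in>{q*c..<q*c+c}. g (i div c) i) = (\<Sum>i\<in>{0+q*c..<c+q*c}. g (i div c) i)" by (simp add: add.commute)
    also have "\<dots> = (\<Sum>r\<in>{0..<c}. g ((r + q*c) div c) (r + q*c))"
      by (rule sum.shift_bounds_nat_ivl)
    also have "\<dots> = (\<Sum>r<c. g q (c*q + r))"
      using False by (intro sum.cong) (auto simp: atLeast0LessThan ac_simps)
    finally show "(\<Sum>i\<in>{q*c..<q*c+c}. g (i div c) i) = (\<Sum>r<c. g q (c*q + r))" .
  qed
  finally show ?thesis by simp
qed simp

context hgrid
begin

definition Dl :: "nat \<Rightarrow> nat \<Rightarrow> 'a \<Rightarrow> real" where
  "Dl c i \<omega> = (1/2) * (Wg False (c * (i div c)) \<omega> * xi i True \<omega> - Wg True (c * (i div c)) \<omega> * xi i False \<omega>)"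

lemma W_incr_tele: "Wg b (k + c) \<omega> - Wg b k \<omega> = (\<Sum>r<c. xi (k + r) b \<omega>)"
  by (induction c) (simp_all add: xi_def)

lemma levy_eq:
  "levy_riemann W1 W2 (real (c * 2^m) * \<eta>) m \<omega> = (\<Sum>i<c * 2^m. Dl c i \<omega>)"
proof -
  have pt: "real (c * 2^m) * \<eta> * real i / 2^m = real (c * i) * \<eta>" for i
    by (simp add: field_simps)
  have pt': "real (c * 2^m) * \<eta> * real (Suc i) / 2^m = real (c * i + c) * \<eta>" for i
    by (simp add: field_simps)
  have "levy_riemann W1 W2 (real (c * 2^m) * \<eta>) m \<omega> = (1/2) * (\<Sum>q<2^m.
      Wg False (c*q) \<omega> * (Wg True (c*q + c) \<omega> - Wg True (c*q) \<omega>) - Wg True (c*q) \<omega> * (Wg False (c*q + c) \<omega> - Wg False (c*q) \<omega>))"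
    unfolding levy_riemann_def Let_def pt pt' by (simp add: coord_def add.commute)
  also have "\<dots> = (1/2) * (\<Sum>q<2^m. \<Sum>r<c.
      Wg False (c*q) \<omega> * xi (c*q + r) True \<omega> - Wg True (c*q) \<omega> * xi (c*q + r) False \<omega>)"
    by (unfold W_incr_tele) (simp add: sum_distrib_left sum_subtractf)
  also have "(\<Sum>q<2^m. \<Sum>r<c. Wg False (c*q) \<omega> * xi (c*q + r) True \<omega> - Wg True (c*q) \<omega> * xi (c*q + r) False \<omega>)
      = (\<Sum>i<c*2^m. Wg False (c*(i div c)) \<omega> * xi i True \<omega> - Wg True (c*(i div c)) \<omega> * xi i False \<omega>)"
    by (rule sum_blocks[where g="\<lambda>q i. Wg False (c*q) \<omega> * xi i True \<omega> - Wg True (c*q) \<omega> * xi i False \<omega>"])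
  finally show ?thesis by (simp add: Dl_def sum_distrib_left)
qed


lemma Dl_mdiff: "mdiff i (Dl c i)"
proof -
  have ad: "adapted i (Wg b (c * (i div c)))" for b
    by (rule adapted_mono[OF adapted_W]) (simp add: times_div_less_eq_dividend)
  have "mdiff i (\<lambda>\<omega>. (1/2) * (Wg False (c * (i div c)) \<omega> * xi i True \<omega> - Wg True (c * (i div c)) \<omega> * xi i False \<omega>))"
    by (intro mdiff_scale mdiff_diff mdiff_xi ad W_mom)
  then show ?thesis unfolding Dl_def[abs_def] .
qed

lemma Dl_meas[measurable]: "Dl c i \<in> borel_measurable M"
  using mdiff_mom[OF Dl_mdiff] by (rule mom_meas)

lemma E_pair:
  assumes "adapted i H1" "mom M H1" "adapted i H2" "mom M H2"
  shows "expectation (\<lambda>\<omega>. ((1/2) * (H1 \<omega> * xi i True \<omega> - H2 \<omega> * xi i False \<omega>))^2)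
           \<le> (1/2) * (expectation (\<lambda>\<omega>. H1 \<omega>^2) + expectation (\<lambda>\<omega>. H2 \<omega>^2)) * \<eta>"
proof -
  have m1: "mom M (\<lambda>\<omega>. H1 \<omega> * xi i True \<omega>)" by (intro mom_mult assms xi_mom)
  have m2: "mom M (\<lambda>\<omega>. H2 \<omega> * xi i False \<omega>)" by (intro mom_mult assms xi_mom)
  have ineq: "((1/2) * (x - y))^2 \<le> (1/2) * (x^2 + y^2)" for x y :: real
  proof -
    have "0 \<le> (x + y)^2" by simp
    then show ?thesis by (simp add: power2_eq_square algebra_simps)
  qed
  have "expectation (\<lambda>\<omega>. ((1/2) * (H1 \<omega> * xi i True \<omega> - H2 \<omega> * xi i False \<omega>))^2)
      \<le> expectation (\<lambda>\<omega>. (1/2) * ((H1 \<omega> * xi i True \<omega>)^2 + (H2 \<omega> * xi i False \<omega>)^2))"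
  proof (rule Bochner_Integration.integral_mono)
    show "integrable M (\<lambda>\<omega>. ((1/2) * (H1 \<omega> * xi i True \<omega> - H2 \<omega> * xi i False \<omega>))^2)"
      using m1 m2 by (intro mom_int mom_pow mom_scale mom_diff)
    show "integrable M (\<lambda>\<omega>. (1/2) * ((H1 \<omega> * xi i True \<omega>)^2 + (H2 \<omega> * xi i False \<omega>)^2))"
      using m1 m2 by (intro mom_int mom_scale mom_add mom_pow)
  qed (rule ineq)
  also have "\<dots> = (1/2) * (expectation (\<lambda>\<omega>. (H1 \<omega> * xi i True \<omega>)^2) + expectation (\<lambda>\<omega>. (H2 \<omega> * xi i False \<omega>)^2))"
    using m1 m2 by (simp add: mom_int mom_pow)
  also have "\<dots> = (1/2) * (expectation (\<lambda>\<omega>. H1 \<omega>^2) * \<eta> + expectation (\<lambda>\<omega>. H2 \<omega>^2) * \<eta>)"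
    using assms by (simp add: E_mult_xi2)
  finally show ?thesis by (simp add: algebra_simps)
qed

lemma E_Dl1: "expectation (\<lambda>\<omega>. Dl 1 i \<omega>^2) \<le> real i * \<eta>^2"
proof -
  have "expectation (\<lambda>\<omega>. Dl 1 i \<omega>^2) = expectation (\<lambda>\<omega>. ((1/2) * (Wg False i \<omega> * xi i True \<omega> - Wg True i \<omega> * xi i False \<omega>))^2)"
    by (simp add: Dl_def)
  also have "\<dots> \<le> (1/2) * (expectation (\<lambda>\<omega>. Wg False i \<omega>^2) + expectation (\<lambda>\<omega>. Wg True i \<omega>^2)) * \<eta>"
    by (intro E_pair adapted_W W_mom)
  also have "\<dots> = (1/2) * (real i * \<eta> + real i * \<eta>) * \<eta>" by (simp only: E_W2)
  also have "\<dots> = real i * \<eta>^2" by (simp add: power2_eq_square)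
  finally show ?thesis .
qed

lemma E_Dldiff:
  assumes c: "1 \<le> c"
  shows "expectation (\<lambda>\<omega>. (Dl c i \<omega> - Dl 1 i \<omega>)^2) \<le> real c * \<eta>^2"
proof -
  define a where "a = c * (i div c)"
  have ai: "a \<le> i" unfolding a_def by (simp add: times_div_less_eq_dividend)
  have ia: "i - a < c" unfolding a_def using c
    by (metis minus_mult_div_eq_mod mod_less_divisor mult.commute not_one_le_zero zero_less_iff_neq_zero)
  have ad: "adapted i (\<lambda>\<omega>. Wg b a \<omega> - Wg b i \<omega>)" for b
    by (intro adapted_diff adapted_mono[OF adapted_W] ai order_refl)
  have md: "mom M (\<lambda>\<omega>. Wg b a \<omega> - Wg b i \<omega>)" for b by (intro mom_diff W_mom)
  have Eb: "expectation (\<lambda>\<omega>. (Wg b a \<omega> - Wg b i \<omega>)^2) = real (i - a) * \<eta>" for b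
  proof -
    have "expectation (\<lambda>\<omega>. (Wg b a \<omega> - Wg b i \<omega>)^2) = expectation (\<lambda>\<omega>. (Wg b i \<omega> - Wg b a \<omega>)^2)"
      by (simp add: power2_commute)
    then show ?thesis using E_incr[OF ai] by simp
  qed
  have "expectation (\<lambda>\<omega>. (Dl c i \<omega> - Dl 1 i \<omega>)^2) = expectation (\<lambda>\<omega>. ((1/2) * ((Wg False a \<omega> - Wg False i \<omega>) * xi i True \<omega> - (Wg True a \<omega> - Wg True i \<omega>) * xi i False \<omega>))^2)"
    by (intro Bochner_Integration.integral_cong refl) (simp add: Dl_def a_def algebra_simps)
  also have "\<dots> \<le> (1/2) * (expectation (\<lambda>\<omega>. (Wg False a \<omega> - Wg False i \<omega>)^2) + expectation (\<lambda>\<omega>. (Wg True a \<omega> - Wg True i \<omega>)^2)) * \<eta>"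
    by (intro E_pair ad md)
  also have "\<dots> = (1/2) * (real (i - a) * \<eta> + real (i - a) * \<eta>) * \<eta>" by (simp only: Eb)
  also have "\<dots> = real (i - a) * \<eta>^2" by (simp add: power2_eq_square)
  also have "\<dots> \<le> real c * \<eta>^2" using ia by (intro mult_right_mono) auto
  finally show ?thesis .
qed

lemma R1_max:
  assumes x: "0 < x"
  shows "measure M {\<omega>\<in>space M. \<exists>k\<le>N. x \<le> \<bar>\<Sum>i<k. Dl 1 i \<omega>\<bar>} \<le> (real N * \<eta>)^2 / x^2"
proof -
  have "measure M {\<omega>\<in>space M. \<exists>k\<le>N. x \<le> \<bar>\<Sum>i<k. Dl 1 i \<omega>\<bar>} \<le> expectation (\<lambda>\<omega>. (\<Sum>i<N. Dl 1 i \<omega>)^2) / x^2"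
    by (rule kolmogorov[OF Dl_mdiff x])
  also have "expectation (\<lambda>\<omega>. (\<Sum>i<N. Dl 1 i \<omega>)^2) = (\<Sum>i<N. expectation (\<lambda>\<omega>. Dl 1 i \<omega>^2))"
    by (rule pythagoras[OF Dl_mdiff])
  also have "\<dots> \<le> (\<Sum>i<N. real N * \<eta>^2)"
  proof (rule sum_mono)
    fix i assume "i \<in> {..<N}"
    then have "real i * \<eta>^2 \<le> real N * \<eta>^2" by (intro mult_right_mono) auto
    then show "expectation (\<lambda>\<omega>. Dl 1 i \<omega>^2) \<le> real N * \<eta>^2" using E_Dl1[of i] by linarith
  qed
  also have "(\<Sum>i<N. real N * \<eta>^2) = (real N * \<eta>)^2" by (simp add: power2_eq_square)
  finally show ?thesis using x by (simp add: divide_right_mono)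
qed

lemma Rdiff:
  assumes c: "1 \<le> c" and x: "0 < x"
  shows "measure M {\<omega>\<in>space M. x \<le> \<bar>(\<Sum>i<K. Dl c i \<omega>) - (\<Sum>i<K. Dl 1 i \<omega>)\<bar>} \<le> real K * real c * \<eta>^2 / x^2"
proof -
  have md: "mdiff i (\<lambda>\<omega>. Dl c i \<omega> - Dl 1 i \<omega>)" for i by (intro mdiff_diff Dl_mdiff)
  have "measure M {\<omega>\<in>space M. x \<le> \<bar>(\<Sum>i<K. Dl c i \<omega>) - (\<Sum>i<K. Dl 1 i \<omega>)\<bar>}
      \<le> measure M {\<omega>\<in>space M. \<exists>k\<le>K. x \<le> \<bar>\<Sum>i<k. Dl c i \<omega> - Dl 1 i \<omega>\<bar>}"
    by (rule finite_measure_mono) (auto simp: sum_subtractf)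
  also have "\<dots> \<le> expectation (\<lambda>\<omega>. (\<Sum>i<K. Dl c i \<omega> - Dl 1 i \<omega>)^2) / x^2"
    by (rule kolmogorov[OF md x])
  also have "expectation (\<lambda>\<omega>. (\<Sum>i<K. Dl c i \<omega> - Dl 1 i \<omega>)^2) = (\<Sum>i<K. expectation (\<lambda>\<omega>. (Dl c i \<omega> - Dl 1 i \<omega>)^2))"
    by (rule pythagoras[OF md])
  also have "\<dots> \<le> (\<Sum>i<K. real c * \<eta>^2)" by (intro sum_mono E_Dldiff c)
  also have "\<dots> = real K * real c * \<eta>^2" by simp
  finally show ?thesis using x by (simp add: divide_right_mono)
qed

end


lemma A_grid_m:
  assumes bm: "std_bm2 M W1 W2" and T: "0 < T" and lpos: "0 < lam"
    and Ameas: "\<And>t. A t \<in> borel_measurable M"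
  shows "measure M {\<omega>\<in>space M. \<exists>j\<le>2^L. lam < \<bar>A (real j * T / 2^L) \<omega>\<bar>}
     \<le> (\<Sum>j\<le>2^L. measure M {\<omega>\<in>space M. \<bar>levy_riemann W1 W2 (real j * T / 2^L) m \<omega> - A (real j * T / 2^L) \<omega>\<bar> > lam/4})
       + 16 * 2^L * T^2 / (2^m * lam^2) + 4 * T^2 / lam^2"
proof -
  define \<eta> where "\<eta> = T / 2^(L+m)"
  have eta: "0 < \<eta>" using T by (simp add: \<eta>_def)
  interpret G: hgrid M W1 W2 \<eta> using bm eta by unfold_locales
  note [measurable] = Ameas
  have lr_meas[measurable]: "levy_riemann W1 W2 t k \<in> borel_measurable M" for t k
    unfolding levy_riemann_def Let_def using G.coord_meas[of False] G.coord_meas[of True]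
    by (simp add: coord_def) measurable
  have Neta: "2^(L+m) * \<eta> = T" by (simp add: \<eta>_def)
  have teq: "real j * T / 2^L = real (j * 2^m) * \<eta>" for j
    by (simp add: \<eta>_def power_add field_simps)
  define B1 where "B1 = (\<Union>j\<in>{..2^L}. {\<omega>\<in>space M. \<bar>levy_riemann W1 W2 (real j * T / 2^L) m \<omega> - A (real j * T / 2^L) \<omega>\<bar> > lam/4})"
  define B2 where "B2 = (\<Union>j\<in>{1..2^L}. {\<omega>\<in>space M. lam/4 \<le> \<bar>(\<Sum>i<j*2^m. G.Dl j i \<omega>) - (\<Sum>i<j*2^m. G.Dl 1 i \<omega>)\<bar>})"
  define B3 where "B3 = {\<omega>\<in>space M. \<exists>k\<le>2^(L+m). lam/2 \<le> \<bar>\<Sum>i<k. G.Dl 1 i \<omega>\<bar>}"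
  have B1m: "B1 \<in> sets M" unfolding B1_def by measurable
  have B2m: "B2 \<in> sets M" unfolding B2_def by measurable
  have B3m: "B3 \<in> sets M" unfolding B3_def by measurable
  have sub: "{\<omega>\<in>space M. \<exists>j\<le>2^L. lam < \<bar>A (real j * T / 2^L) \<omega>\<bar>} \<subseteq> B1 \<union> B2 \<union> B3"
  proof (intro subsetI)
    fix \<omega> assume "\<omega> \<in> {\<omega>\<in>space M. \<exists>j\<le>2^L. lam < \<bar>A (real j * T / 2^L) \<omega>\<bar>}"
    then obtain j where \<omega>: "\<omega> \<in> space M" and j: "j \<le> 2^L" and lt: "lam < \<bar>A (real j * T / 2^L) \<omega>\<bar>" by blast
    show "\<omega> \<in> B1 \<union> B2 \<union> B3"
    proof (rule ccontr)
    assume nn: "\<omega> \<notin> B1 \<union> B2 \<union> B3"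
    then have n1: "\<omega> \<notin> B1" and n2: "\<omega> \<notin> B2" and n3: "\<omega> \<notin> B3" by auto
    let ?t = "real j * T / 2^L"
    let ?R = "\<Sum>i<j*2^m. G.Dl j i \<omega>"
    let ?F = "\<Sum>i<j*2^m. G.Dl 1 i \<omega>"
    have lrR: "levy_riemann W1 W2 ?t m \<omega> = ?R" unfolding teq by (rule G.levy_eq)
    have h1: "\<bar>?R - A ?t \<omega>\<bar> \<le> lam/4" using n1 \<omega> j lrR unfolding B1_def by force
    have h2: "\<bar>?R - ?F\<bar> < lam/4"
    proof (cases "j = 0")
      case True then show ?thesis using lpos by simp
    next
      case False
      then have jin: "j \<in> {1..2^L}" using j by auto
      have "\<not> (lam/4 \<le> \<bar>?R - ?F\<bar>)"
      proof
        assume "lam/4 \<le> \<bar>?R - ?F\<bar>"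
        then have "\<omega> \<in> B2" unfolding B2_def using jin \<omega> by blast
        then show False using n2 by simp
      qed
      then show ?thesis by simp
    qed
    have "lam/2 \<le> \<bar>?F\<bar>" using h1 h2 lt by linarith
    moreover have "j * 2^m \<le> 2^(L+m)" using j by (simp add: power_add)
    ultimately have "\<omega> \<in> B3" unfolding B3_def using \<omega> by blast
    then show False using n3 by simp
    qed
  qed
  have "measure M {\<omega>\<in>space M. \<exists>j\<le>2^L. lam < \<bar>A (real j * T / 2^L) \<omega>\<bar>} \<le> measure M (B1 \<union> B2 \<union> B3)"
    using B1m B2m B3m sub by (intro G.finite_measure_mono) auto
  also have "\<dots> \<le> measure M B1 + measure M B2 + measure M B3"
    using B1m B2m B3m by (meson add_right_mono measure_Un_le order_trans sets.Un)
  also have "measure M B1 \<le> (\<Sum>j\<le>2^L. measure M {\<omega>\<in>space M. \<bar>levy_riemann W1 W2 (real j * T / 2^L) m \<omega> - A (real j * T / 2^L) \<omega>\<bar> > lam/4})"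
    unfolding B1_def by (rule measure_UNION_le) auto
  also have "measure M B2 \<le> (\<Sum>j\<in>{1..2^L}. real (j*2^m) * real j * \<eta>^2 / (lam/4)^2)"
    unfolding B2_def
  proof (rule order.trans[OF measure_UNION_le sum_mono])
    fix j assume j: "j \<in> {1..(2::nat)^L}"
    show "measure M {\<omega>\<in>space M. lam/4 \<le> \<bar>(\<Sum>i<j*2^m. G.Dl j i \<omega>) - (\<Sum>i<j*2^m. G.Dl 1 i \<omega>)\<bar>}
        \<le> real (j*2^m) * real j * \<eta>^2 / (lam/4)^2"
      by (rule G.Rdiff) (use j lpos in auto)
  qed auto
  also have "\<dots> \<le> (\<Sum>j\<in>{1..(2::nat)^L}. 16 * T^2 / (2^m * lam^2))"
  proof (rule sum_mono)
    fix j assume j: "j \<in> {1..(2::nat)^L}"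
    have a: "real (j*2^m) \<le> 2^(L+m)" using j by (simp add: power_add)
    have b: "real j \<le> 2^L" using j by simp
    have "real (j*2^m) * real j * \<eta>^2 \<le> 2^(L+m) * 2^L * \<eta>^2"
      using a b eta by (intro mult_right_mono mult_mono) auto
    also have "\<dots> = T^2 / 2^m" by (simp add: \<eta>_def power_add power2_eq_square field_simps)
    finally have "real (j*2^m) * real j * \<eta>^2 \<le> T^2 / 2^m" .
    then have "real (j*2^m) * real j * \<eta>^2 / (lam/4)^2 \<le> (T^2 / 2^m) / (lam/4)^2"
      using lpos by (intro divide_right_mono) auto
    also have "\<dots> = 16 * T^2 / (2^m * lam^2)" by (simp add: power2_eq_square field_simps)
    finally show "real (j*2^m) * real j * \<eta>^2 / (lam/4)^2 \<le> 16 * T^2 / (2^m * lam^2)" .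
  qed
  also have "\<dots> = 16 * 2^L * T^2 / (2^m * lam^2)" by simp
  also have "measure M B3 \<le> (real (2^(L+m)) * \<eta>)^2 / (lam/2)^2"
    unfolding B3_def by (rule G.R1_max) (simp add: lpos)
  also have "\<dots> = 4 * T^2 / lam^2" using Neta by (simp add: power2_eq_square field_simps)
  finally show ?thesis by simp
qed


lemma A_grid:
  assumes bm: "std_bm2 M W1 W2" and la: "levy_area M W1 W2 A" and T: "0 < T" and lpos: "0 < lam"
  shows "measure M {\<omega>\<in>space M. \<exists>j\<le>2^L. lam < \<bar>A (real j * T / 2^L) \<omega>\<bar>} \<le> 4 * T^2 / lam^2"
proof (rule LIMSEQ_le_const)
  have Ameas: "\<And>t. A t \<in> borel_measurable M" using la by (simp add: levy_area_def)
  have conv: "\<forall>t\<ge>0. \<forall>e>0. (\<lambda>m. measure M {\<omega>\<in>space M. \<bar>levy_riemann W1 W2 t m \<omega> - A t \<omega>\<bar> > e}) \<longlonglongrightarrow> 0"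
    using la by (simp add: levy_area_def)
  let ?f = "\<lambda>m. (\<Sum>j\<le>2^L. measure M {\<omega>\<in>space M. \<bar>levy_riemann W1 W2 (real j * T / 2^L) m \<omega> - A (real j * T / 2^L) \<omega>\<bar> > lam/4})
       + 16 * 2^L * T^2 / (2^m * lam^2) + 4 * T^2 / lam^2"
  have t1: "(\<lambda>m. \<Sum>j\<le>2^L. measure M {\<omega>\<in>space M. \<bar>levy_riemann W1 W2 (real j * T / 2^L) m \<omega> - A (real j * T / 2^L) \<omega>\<bar> > lam/4}) \<longlonglongrightarrow> 0"
    by (intro tendsto_null_sum conv[rule_format]) (use T lpos in auto)
  have eq: "(\<lambda>m. 16 * 2^L * T^2 / (2^m * lam^2)) = (\<lambda>m. (16 * 2^L * T^2 / lam^2) * (1/2)^m)"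
    by (simp add: fun_eq_iff field_simps power_divide)
  have t2: "(\<lambda>m. 16 * 2^L * T^2 / (2^m * lam^2)) \<longlonglongrightarrow> 0"
    unfolding eq by (intro tendsto_mult_right_zero LIMSEQ_power_zero) simp
  show "?f \<longlonglongrightarrow> 4 * T^2 / lam^2"
    using tendsto_add[OF tendsto_add[OF t1 t2] tendsto_const[of "4 * T^2 / lam^2"]] by simp
  show "\<exists>N. \<forall>n\<ge>N. measure M {\<omega>\<in>space M. \<exists>j\<le>2^L. lam < \<bar>A (real j * T / 2^L) \<omega>\<bar>} \<le> ?f n"
  proof (intro exI allI impI)
    fix n :: nat
    show "measure M {\<omega>\<in>space M. \<exists>j\<le>2^L. lam < \<bar>A (real j * T / 2^L) \<omega>\<bar>} \<le> ?f n"
      by (rule A_grid_m[OF bm T lpos]) (rule Ameas)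
  qed
qed

lemma W_grid:
  assumes bm: "std_bm2 M W1 W2" and T: "0 < T" and mu: "2 * T < \<mu>"
  shows "measure M {\<omega>\<in>space M. \<exists>j\<le>2^L. \<mu> < W1 (real j * T / 2^L) \<omega>^2 + W2 (real j * T / 2^L) \<omega>^2}
           \<le> 48 * T^2 / (\<mu> - 2 * T)^2"
proof -
  define \<eta> where "\<eta> = T / 2^L"
  have eta: "0 < \<eta>" using T by (simp add: \<eta>_def)
  interpret G: hgrid M W1 W2 \<eta> using bm eta by unfold_locales
  have Neta: "real (2^L) * \<eta> = T" by (simp add: \<eta>_def)
  have "{\<omega>\<in>space M. \<exists>j\<le>2^L. \<mu> < W1 (real j * T / 2^L) \<omega>^2 + W2 (real j * T / 2^L) \<omega>^2}
      = {\<omega>\<in>space M. \<exists>k\<le>2^L. \<mu> < G.Wg False k \<omega>^2 + G.Wg True k \<omega>^2}"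
    by (simp add: coord_def \<eta>_def)
  also have "measure M \<dots> \<le> 48 * (real (2^L) * \<eta>)^2 / (\<mu> - 2 * real (2^L) * \<eta>)^2"
    by (rule G.W_max) (use mu Neta in auto)
  finally have fin: "measure M {\<omega>\<in>space M. \<exists>j\<le>2^L. \<mu> < W1 (real j * T / 2^L) \<omega>^2 + W2 (real j * T / 2^L) \<omega>^2}
     \<le> 48 * (real (2^L) * \<eta>)^2 / (\<mu> - 2 * (real (2^L) * \<eta>))^2" by (simp add: mult.assoc)
  show ?thesis using fin unfolding Neta .
qed

lemma heis_gt:
  assumes "rho < heis_norm x y z" "0 < rho"
  shows "rho^2/2 < x^2 + y^2 \<or> rho^2/2 < \<bar>z\<bar>"
proof (rule ccontr)
  assume "\<not> ?thesis"
  then have a: "x^2 + y^2 \<le> rho^2/2" and b: "\<bar>z\<bar> \<le> rho^2/2" by auto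
  have "(x^2 + y^2)^2 \<le> (rho^2/2)^2" using a by (intro power_mono) auto
  moreover have "z^2 \<le> (rho^2/2)^2" using b by (metis abs_ge_zero power2_abs power_mono)
  ultimately have le: "(x^2+y^2)^2 + z^2 \<le> rho^4 / 2" by (simp add: power2_eq_square power_numeral_reduce)
  let ?b = "(x^2+y^2)^2 + z^2"
  have b0: "0 \<le> ?b" by simp
  have "rho^4 < (?b powr (1/4))^4" using assms unfolding heis_norm_def
    by (intro power_strict_mono) auto
  also have "(?b powr (1/4))^4 = ?b"
  proof (cases "?b = 0")
    case False
    then have "(?b powr (1/4))^4 = ?b powr (of_nat 4 * (1/4))" by (rule powr_power)
    also have "\<dots> = ?b" using b0 False by simp
    finally show ?thesis .
  qed simp
  finally have "rho^4 < ?b" .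
  moreover have "0 < rho^4" using assms(2) by simp
  ultimately show False using le by linarith
qed


lemma heis_meas[measurable]:
  assumes [measurable]: "f \<in> borel_measurable M" "g \<in> borel_measurable M" "h \<in> borel_measurable M"
  shows "(\<lambda>\<omega>. heis_norm (f \<omega>) (g \<omega>) (h \<omega>)) \<in> borel_measurable M"
  unfolding heis_norm_def by measurable

lemma H_grid:
  assumes bm: "std_bm2 M W1 W2" and la: "levy_area M W1 W2 A" and T: "0 < T" and rho: "0 < rho"
    and big: "8 * T \<le> rho^2"
  shows "measure M {\<omega>\<in>space M. \<exists>j\<le>2^L. rho < heis_norm (W1 (real j * T / 2^L) \<omega>) (W2 (real j * T / 2^L) \<omega>) (A (real j * T / 2^L) \<omega>)}
    \<le> 800 * (T / rho^2)^2"
proof -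
  interpret prob_space M using bm by (simp add: std_bm2_def)
  have [measurable]: "W1 t \<in> borel_measurable M" "W2 t \<in> borel_measurable M" "A t \<in> borel_measurable M" for t
    using bm la by (auto simp: std_bm2_def levy_area_def)
  let ?s = "\<lambda>j. real j * T / 2^L"
  define SW where "SW = {\<omega>\<in>space M. \<exists>j\<le>2^L. rho^2/2 < W1 (?s j) \<omega>^2 + W2 (?s j) \<omega>^2}"
  define SA where "SA = {\<omega>\<in>space M. \<exists>j\<le>2^L. rho^2/2 < \<bar>A (?s j) \<omega>\<bar>}"
  have SWm: "SW \<in> sets M" unfolding SW_def by measurable
  have SAm: "SA \<in> sets M" unfolding SA_def by measurable
  have sub: "{\<omega>\<in>space M. \<exists>j\<le>2^L. rho < heis_norm (W1 (?s j) \<omega>) (W2 (?s j) \<omega>) (A (?s j) \<omega>)} \<subseteq> SW \<union> SA"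
    unfolding SW_def SA_def using heis_gt[OF _ rho] by blast
  have r2: "0 < rho^2" using rho by simp
  have "measure M {\<omega>\<in>space M. \<exists>j\<le>2^L. rho < heis_norm (W1 (?s j) \<omega>) (W2 (?s j) \<omega>) (A (?s j) \<omega>)}
      \<le> measure M (SW \<union> SA)" using sub SWm SAm by (intro finite_measure_mono) auto
  also have "\<dots> \<le> measure M SW + measure M SA" using SWm SAm by (rule measure_Un_le)
  also have "measure M SW \<le> 48 * T^2 / (rho^2/2 - 2 * T)^2"
    unfolding SW_def by (rule W_grid[OF bm T]) (use big T in simp)
  also have "measure M SA \<le> 4 * T^2 / (rho^2/2)^2"
    unfolding SA_def by (rule A_grid[OF bm la T]) (use rho in simp)
  also have "48 * T^2 / (rho^2/2 - 2 * T)^2 \<le> 48 * T^2 / (rho^2/4)^2"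
  proof (rule divide_left_mono)
    have "rho^2/4 \<le> rho^2/2 - 2 * T" using big by simp
    then show "(rho^2/4)^2 \<le> (rho^2/2 - 2 * T)^2" using r2 by (intro power_mono) auto
  next
    have "0 < rho^2/2 - 2 * T" using big T by simp
    then show "0 < (rho^2/2 - 2 * T)^2 * (rho^2/4)^2" using r2 by simp
  qed simp
  also have "48 * T^2 / (rho^2/4)^2 + 4 * T^2 / (rho^2/2)^2 = 784 * (T / rho^2)^2"
    using r2 by (simp add: power2_eq_square field_simps)
  also have "\<dots> \<le> 800 * (T / rho^2)^2" by simp
  finally show ?thesis by simp
qed


lemma hbm_gt_iff:
  assumes c1: "continuous_on {0..} (\<lambda>t. W1 t \<omega>)" and c2: "continuous_on {0..} (\<lambda>t. W2 t \<omega>)"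
    and c3: "continuous_on {0..} (\<lambda>t. A t \<omega>)" and T: "0 < T"
  shows "rho < hbm_max W1 W2 A T \<omega> \<longleftrightarrow>
    (\<exists>L. \<exists>j\<le>2^L. rho < heis_norm (W1 (real j * T / 2^L) \<omega>) (W2 (real j * T / 2^L) \<omega>) (A (real j * T / 2^L) \<omega>))"
proof -
  define f where "f s = heis_norm (W1 s \<omega>) (W2 s \<omega>) (A s \<omega>)" for s
  have sub: "{0..T} \<subseteq> {0::real..}" by auto
  have d1: "continuous_on {0..T} (\<lambda>t. W1 t \<omega>)" using continuous_on_subset[OF c1 sub] .
  have d2: "continuous_on {0..T} (\<lambda>t. W2 t \<omega>)" using continuous_on_subset[OF c2 sub] .
  have d3: "continuous_on {0..T} (\<lambda>t. A t \<omega>)" using continuous_on_subset[OF c3 sub] .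
  have cont: "continuous_on {0..T} f"
    unfolding f_def[abs_def] heis_norm_def
    by (rule continuous_on_powr') (auto intro!: continuous_intros d1 d2 d3)
  have bdd: "bdd_above (f ` {0..T})"
    by (intro bounded_imp_bdd_above compact_imp_bounded compact_continuous_image cont) simp
  have ne: "{0..T} \<noteq> {}" using T by simp
  have hm: "hbm_max W1 W2 A T \<omega> = (SUP s\<in>{0..T}. f s)" unfolding hbm_max_def f_def ..
  have "rho < hbm_max W1 W2 A T \<omega> \<longleftrightarrow> (\<exists>s\<in>{0..T}. rho < f s)"
    unfolding hm by (rule less_cSUP_iff[OF ne bdd])
  also have "\<dots> \<longleftrightarrow> (\<exists>L. \<exists>j\<le>2^L. rho < f (real j * T / 2^L))"
  proof
    assume "\<exists>L. \<exists>j\<le>2^L. rho < f (real j * T / 2^L)"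
    then obtain L j where j: "j \<le> 2^L" and lt: "rho < f (real j * T / 2^L)" by blast
    have "real j \<le> 2^L" using j by (metis of_nat_le_iff of_nat_numeral of_nat_power)
    then have "real j * T / 2^L \<le> T" using T by (simp add: field_simps)
    moreover have "0 \<le> real j * T / 2^L" using T by simp
    ultimately show "\<exists>s\<in>{0..T}. rho < f s" using lt by auto
  next
    assume "\<exists>s\<in>{0..T}. rho < f s"
    then obtain s where s: "s \<in> {0..T}" and lt: "rho < f s" by blast
    obtain d where d: "0 < d" and dd: "\<And>x'. x' \<in> {0..T} \<Longrightarrow> dist x' s < d \<Longrightarrow> dist (f x') (f s) < f s - rho"
      using cont s lt unfolding continuous_on_iff by (metis diff_gt_0_iff_gt)
    obtain L where L: "T / d < 2^L" using real_arch_pow[of 2 "T / d"] by auto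
    have L': "T / 2^L < d" using L d by (simp add: field_simps)
    define u where "u = s * 2^L / T"
    have u0: "0 \<le> u" using s T by (simp add: u_def)
    have uL: "u \<le> 2^L" using s T by (simp add: u_def field_simps)
    define j where "j = nat \<lfloor>u\<rfloor>"
    have rj: "real j = of_int \<lfloor>u\<rfloor>" using u0 by (simp add: j_def)
    have ju: "real j \<le> u" "u < real j + 1" unfolding rj by linarith+
    have jL: "j \<le> 2^L"
    proof -
      have "real j \<le> 2^L" using ju uL by linarith
      then show ?thesis by (metis of_nat_le_iff of_nat_numeral of_nat_power)
    qed
    let ?t = "real j * T / 2^L"
    have t_in: "?t \<in> {0..T}"
    proof -
      have "real j \<le> 2^L" using jL by (metis of_nat_le_iff of_nat_numeral of_nat_power)
      then show ?thesis using T by (simp add: field_simps)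
    qed
    have "s = u * T / 2^L" using T by (simp add: u_def)
    then have "s - ?t = (u - real j) * T / 2^L" by (simp add: field_simps)
    moreover have "0 \<le> (u - real j) * T / 2^L" using ju T by simp
    moreover have "(u - real j) * T / 2^L < T / 2^L" using ju T by (simp add: divide_strict_right_mono)
    ultimately have "dist ?t s < d" using L' by (simp add: dist_real_def)
    then have "dist (f ?t) (f s) < f s - rho" using dd t_in by blast
    then have "rho < f ?t" by (simp add: dist_real_def)
    then show "\<exists>L. \<exists>j\<le>2^L. rho < f (real j * T / 2^L)" using jL by blast
  qed
  finally show ?thesis unfolding f_def .
qed


lemma hbm_tail:
  assumes bm: "std_bm2 M W1 W2" and la: "levy_area M W1 W2 A" and T: "0 < T" and rho: "0 < rho"
    and big: "8 * T \<le> rho^2"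
  shows "{\<omega>\<in>space M. rho < hbm_max W1 W2 A T \<omega>} \<in> sets M"
    and "measure M {\<omega>\<in>space M. rho < hbm_max W1 W2 A T \<omega>} \<le> 800 * (T / rho^2)^2"
proof -
  interpret prob_space M using bm by (simp add: std_bm2_def)
  have [measurable]: "W1 t \<in> borel_measurable M" "W2 t \<in> borel_measurable M" "A t \<in> borel_measurable M" for t
    using bm la by (auto simp: std_bm2_def levy_area_def)
  define G where "G L = {\<omega>\<in>space M. \<exists>j\<le>2^L. rho < heis_norm (W1 (real j * T / 2^L) \<omega>) (W2 (real j * T / 2^L) \<omega>) (A (real j * T / 2^L) \<omega>)}" for L :: nat
  have Gm: "G L \<in> sets M" for L unfolding G_def by measurable
  have eq: "{\<omega>\<in>space M. rho < hbm_max W1 W2 A T \<omega>} = (\<Union>L. G L)"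
  proof -
    have "rho < hbm_max W1 W2 A T \<omega> \<longleftrightarrow>
      (\<exists>L. \<exists>j\<le>2^L. rho < heis_norm (W1 (real j * T / 2^L) \<omega>) (W2 (real j * T / 2^L) \<omega>) (A (real j * T / 2^L) \<omega>))"
      if "\<omega> \<in> space M" for \<omega>
      using that bm la T by (intro hbm_gt_iff) (auto simp: std_bm2_def levy_area_def)
    then show ?thesis unfolding G_def by blast
  qed
  show sm: "{\<omega>\<in>space M. rho < hbm_max W1 W2 A T \<omega>} \<in> sets M" unfolding eq using Gm by auto
  have inc: "incseq G"
  proof (rule incseq_SucI)
    fix L show "G L \<subseteq> G (Suc L)"
    proof
      fix \<omega> assume "\<omega> \<in> G L"
      then obtain j where \<omega>: "\<omega> \<in> space M" and j: "j \<le> 2^L"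
        and lt: "rho < heis_norm (W1 (real j * T / 2^L) \<omega>) (W2 (real j * T / 2^L) \<omega>) (A (real j * T / 2^L) \<omega>)"
        unfolding G_def by blast
      have e: "real (2*j) * T / 2^Suc L = real j * T / 2^L" by simp
      have "2*j \<le> 2^Suc L" using j by simp
      then show "\<omega> \<in> G (Suc L)" unfolding G_def using \<omega> lt e by (metis (no_types, lifting) mem_Collect_eq)
    qed
  qed
  have lim: "(\<lambda>L. measure M (G L)) \<longlonglongrightarrow> measure M (\<Union>L. G L)"
    by (rule finite_Lim_measure_incseq[OF _ inc]) (use Gm in auto)
  have "measure M (\<Union>L. G L) \<le> 800 * (T / rho^2)^2"
    by (rule LIMSEQ_le_const2[OF lim]) (use H_grid[OF bm la T rho big] in \<open>auto simp: G_def\<close>)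
  then show "measure M {\<omega>\<in>space M. rho < hbm_max W1 W2 A T \<omega>} \<le> 800 * (T / rho^2)^2"
    unfolding eq .
qed


lemma hbm_set_meas:
  assumes bm: "std_bm2 M W1 W2" and la: "levy_area M W1 W2 A" and T: "0 < T"
  shows "{\<omega>\<in>space M. rho < hbm_max W1 W2 A T \<omega>} \<in> sets M"
proof -
  have [measurable]: "W1 t \<in> borel_measurable M" "W2 t \<in> borel_measurable M" "A t \<in> borel_measurable M" for t
    using bm la by (auto simp: std_bm2_def levy_area_def)
  define G where "G L = {\<omega>\<in>space M. \<exists>j\<le>2^L. rho < heis_norm (W1 (real j * T / 2^L) \<omega>) (W2 (real j * T / 2^L) \<omega>) (A (real j * T / 2^L) \<omega>)}" for L :: nat
  have Gm: "G L \<in> sets M" for L unfolding G_def by measurable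
  have eq: "{\<omega>\<in>space M. rho < hbm_max W1 W2 A T \<omega>} = (\<Union>L. G L)"
  proof -
    have "rho < hbm_max W1 W2 A T \<omega> \<longleftrightarrow>
      (\<exists>L. \<exists>j\<le>2^L. rho < heis_norm (W1 (real j * T / 2^L) \<omega>) (W2 (real j * T / 2^L) \<omega>) (A (real j * T / 2^L) \<omega>))"
      if "\<omega> \<in> space M" for \<omega>
      using that bm la T by (intro hbm_gt_iff) (auto simp: std_bm2_def levy_area_def)
    then show ?thesis unfolding G_def by blast
  qed
  show ?thesis unfolding eq using Gm by auto
qed

lemma hbm_measurable:
  assumes bm: "std_bm2 M W1 W2" and la: "levy_area M W1 W2 A" and T: "0 < T"
  shows "hbm_max W1 W2 A T \<in> borel_measurable M"
  using hbm_set_meas[OF assms] by (simp add: borel_measurable_iff_greater)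

lemma hbm_nonneg:
  assumes bm: "std_bm2 M W1 W2" and la: "levy_area M W1 W2 A" and T: "0 < T" and \<omega>: "\<omega> \<in> space M"
  shows "0 \<le> hbm_max W1 W2 A T \<omega>"
proof (rule ccontr)
  assume "\<not> 0 \<le> hbm_max W1 W2 A T \<omega>"
  then have neg: "hbm_max W1 W2 A T \<omega> < 0" by simp
  have "hbm_max W1 W2 A T \<omega> < hbm_max W1 W2 A T \<omega> \<longleftrightarrow>
      (\<exists>L. \<exists>j\<le>2^L. hbm_max W1 W2 A T \<omega> < heis_norm (W1 (real j * T / 2^L) \<omega>) (W2 (real j * T / 2^L) \<omega>) (A (real j * T / 2^L) \<omega>))"
    using \<omega> bm la T by (intro hbm_gt_iff) (auto simp: std_bm2_def levy_area_def)
  moreover have "hbm_max W1 W2 A T \<omega> < heis_norm (W1 (real 0 * T / 2^0) \<omega>) (W2 (real 0 * T / 2^0) \<omega>) (A (real 0 * T / 2^0) \<omega>)"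
    using neg by (rule order.strict_trans2) (simp add: heis_norm_def)
  ultimately show False by blast
qed

lemma ln_bound8: fixes x :: real assumes "0 < x" shows "ln x \<le> 8 * x powr (1/8)"
proof -
  have "ln x = 8 * ln (x powr (1/8))" using assms by simp
  also have "ln (x powr (1/8)) \<le> x powr (1/8) - 1" using assms by (intro ln_le_minus_one) simp
  finally show ?thesis by simp
qed

lemma r_bound:
  assumes n: "3 \<le> n"
  shows "0 \<le> ln (real n * ln (real n)) / real n" and "ln (real n * ln (real n)) / real n \<le> 8 * real n powr (-3/4)"
proof -
  have "exp 1 \<le> real n" using exp_le n by linarith
  then have ln1: "1 \<le> ln (real n)" using n by (subst ln_ge_iff) auto
  have np: "0 < real n" using n by simp
  have "1 * 1 \<le> real n * ln (real n)" using ln1 n by (intro mult_mono) auto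
  then have "1 \<le> real n * ln (real n)" by simp
  then have l0: "0 \<le> ln (real n * ln (real n))" by simp
  show "0 \<le> ln (real n * ln (real n)) / real n" using l0 np by simp
  have pos: "0 < real n * ln (real n)" using ln1 np by (intro mult_pos_pos) linarith+
  have "ln (real n * ln (real n)) \<le> 8 * (real n * ln (real n)) powr (1/8)" by (rule ln_bound8[OF pos])
  also have "(real n * ln (real n)) powr (1/8) \<le> (real n * real n) powr (1/8)"
    using pos np by (intro powr_mono2) (auto intro: mult_left_mono less_imp_le[OF ln_less_self])
  also have "(real n * real n) powr (1/8) = real n powr (1/4)"
  proof -
    have "(real n * real n) powr (1/8) = real n powr (1/8) * real n powr (1/8)" by (rule powr_mult; simp)
    also have "\<dots> = real n powr (1/8 + 1/8)" by (rule powr_add[symmetric])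
    finally show ?thesis by simp
  qed
  finally have "ln (real n * ln (real n)) \<le> 8 * real n powr (1/4)" by simp
  then have "ln (real n * ln (real n)) / real n \<le> 8 * real n powr (1/4) / real n"
    using np by (intro divide_right_mono) auto
  also have "8 * real n powr (1/4) / real n = 8 * real n powr (-3/4)"
  proof -
    have "real n powr (1/4) / real n = real n powr (1/4) / real n powr 1" using np by simp
    also have "\<dots> = real n powr (1/4 - 1)" by (rule powr_diff[symmetric])
    finally show ?thesis by simp
  qed
  finally show "ln (real n * ln (real n)) / real n \<le> 8 * real n powr (-3/4)" .
qed


lemma tail_n:
  assumes bm: "std_bm2 M W1 W2" and la: "levy_area M W1 W2 A" and eps: "0 < \<epsilon>" and n: "3 \<le> n"
    and small: "ln (real n * ln (real n)) / real n / \<epsilon>^2 \<le> 1/8"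
  shows "measure M {\<omega>\<in>space M. lil_phi (tseq n) * hbm_max W1 W2 A (tseq (n - 1)) \<omega> > \<epsilon>}
           \<le> 800 * (ln (real n * ln (real n)) / real n / \<epsilon>^2)^2"
proof -
  define l where "l = ln (real n * ln (real n))"
  define r where "r = l / real n"
  define t where "t = tseq n"
  define T where "T = tseq (n - 1)"
  have np: "0 < real n" using n by simp
  have "exp 1 \<le> real n" using exp_le n by linarith
  then have ln1: "1 \<le> ln (real n)" using n by (subst ln_ge_iff) auto
  have "3 * 1 \<le> real n * ln (real n)" using ln1 n by (intro mult_mono) auto
  then have l0: "0 < l" unfolding l_def by simp
  obtain m where m: "n = Suc m" using n by (cases n) auto
  have t_eq: "t = real n * real n ^ (n - 1)" unfolding t_def tseq_def m by simp
  have tp: "0 < t" unfolding t_def tseq_def using np by simp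
  have lnt: "ln t = real n * ln (real n)" unfolding t_def tseq_def using np by (simp add: ln_realpow)
  have Tp: "0 < T" unfolding T_def tseq_def using n by simp
  have Tle: "T \<le> real n ^ (n - 1)" unfolding T_def tseq_def by (intro power_mono) auto
  define phi where "phi = lil_phi t"
  have phi2: "phi^2 = l / t" unfolding phi_def lil_phi_def lnt l_def[symmetric] using l0 tp by simp
  have phip: "0 < phi" unfolding phi_def lil_phi_def lnt l_def[symmetric] using l0 tp by simp
  define rho where "rho = \<epsilon> / phi"
  have rhop: "0 < rho" unfolding rho_def using eps phip by simp
  have seteq: "{\<omega>\<in>space M. lil_phi (tseq n) * hbm_max W1 W2 A (tseq (n - 1)) \<omega> > \<epsilon>}
      = {\<omega>\<in>space M. rho < hbm_max W1 W2 A T \<omega>}"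
    unfolding rho_def T_def t_def[symmetric] phi_def[symmetric] using phip
    by (auto simp: pos_divide_less_eq mult.commute)
  define q where "q = T / rho^2"
  have q_eq: "q = T * l / (t * \<epsilon>^2)"
    unfolding q_def rho_def using phip eps by (simp add: power_divide phi2 field_simps)
  have q0: "0 \<le> q" unfolding q_def using Tp by simp
  have "T * l / (t * \<epsilon>^2) \<le> real n ^ (n - 1) * l / (t * \<epsilon>^2)"
    using Tle l0 tp eps by (intro divide_right_mono mult_right_mono) auto
  also have "\<dots> = r / \<epsilon>^2" unfolding t_eq r_def using np by (simp add: field_simps)
  finally have qr: "q \<le> r / \<epsilon>^2" unfolding q_eq .
  have big: "8 * T \<le> rho^2"
  proof -
    have "q \<le> 1/8" using qr small unfolding r_def l_def by linarith
    then show ?thesis unfolding q_def using rhop by (simp add: field_simps)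
  qed
  have "measure M {\<omega>\<in>space M. rho < hbm_max W1 W2 A T \<omega>} \<le> 800 * q^2"
    unfolding q_def by (rule hbm_tail(2)[OF bm la Tp rhop big])
  also have "\<dots> \<le> 800 * (r / \<epsilon>^2)^2" using q0 qr by (simp add: power_mono)
  finally show ?thesis unfolding seteq r_def l_def .
qed


lemma phi_nonneg: assumes "3 \<le> n" shows "0 \<le> lil_phi (tseq n)"
proof -
  have np: "0 < real n" using assms by simp
  have "exp 1 \<le> real n" using exp_le assms by linarith
  then have ln1: "1 \<le> ln (real n)" using assms by (subst ln_ge_iff) auto
  have "1 * 1 \<le> real n * ln (real n)" using ln1 assms by (intro mult_mono) auto
  moreover have "ln (tseq n) = real n * ln (real n)" unfolding tseq_def using np by (simp add: ln_realpow)
  ultimately have "0 \<le> ln (ln (tseq n))" by simp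
  moreover have "0 < tseq n" unfolding tseq_def using np by simp
  ultimately show ?thesis unfolding lil_phi_def by simp
qed

lemma powr_sq: "0 < (x::real) \<Longrightarrow> (x powr a)^2 = x powr (2 * a)"
  by (simp add: power2_eq_square powr_add[symmetric])

lemma summable_tail:
  assumes bm: "std_bm2 M W1 W2" and la: "levy_area M W1 W2 A" and eps: "0 < \<epsilon>"
  shows "summable (\<lambda>n. measure M (if 2 \<le> n then {\<omega>\<in>space M. lil_phi (tseq n) * hbm_max W1 W2 A (tseq (n - 1)) \<omega> > \<epsilon>} else {}))"
proof (rule summable_comparison_test_ev)
  have e2: "0 < \<epsilon>^2 / 8" using eps by simp
  have t0: "(\<lambda>n. 8 * real n powr (-3/4)) \<longlonglongrightarrow> 0"
    by (intro tendsto_mult_right_zero tendsto_neg_powr filterlim_real_sequentially) simp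
  have ev1: "eventually (\<lambda>n. 8 * real n powr (-3/4) < \<epsilon>^2 / 8) sequentially"
    by (rule order_tendstoD(2)[OF t0 e2])
  have ev2: "eventually (\<lambda>n. 3 \<le> n) sequentially" by (rule eventually_ge_at_top)
  show "eventually (\<lambda>n. norm (measure M (if 2 \<le> n then {\<omega>\<in>space M. lil_phi (tseq n) * hbm_max W1 W2 A (tseq (n - 1)) \<omega> > \<epsilon>} else {}))
        \<le> (800 * 64 / \<epsilon>^4) * real n powr (-3/2)) sequentially"
    using ev1 ev2
  proof eventually_elim
    case (elim n)
    define r where "r = ln (real n * ln (real n)) / real n"
    have r0: "0 \<le> r" and r8: "r \<le> 8 * real n powr (-3/4)" unfolding r_def using r_bound[OF elim(2)] by auto
    have small: "r / \<epsilon>^2 \<le> 1/8" using r8 elim(1) eps by (simp add: field_simps)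
    have "measure M {\<omega>\<in>space M. lil_phi (tseq n) * hbm_max W1 W2 A (tseq (n - 1)) \<omega> > \<epsilon>} \<le> 800 * (r / \<epsilon>^2)^2"
      unfolding r_def by (rule tail_n[OF bm la eps elim(2)]) (use small in \<open>simp add: r_def\<close>)
    also have "\<dots> \<le> 800 * (8 * real n powr (-3/4) / \<epsilon>^2)^2"
      using r0 r8 eps by (intro mult_left_mono power_mono divide_right_mono) auto
    also have "\<dots> = (800 * 64 / \<epsilon>^4) * (real n powr (-3/4))^2"
      by (simp add: power_divide power_mult_distrib)
    also have "(real n powr (-3/4))^2 = real n powr (-3/2)" using elim(2) by (simp add: powr_sq)
    finally show ?case using elim(2) by simp
  qed
  show "summable (\<lambda>n. (800 * 64 / \<epsilon>^4) * real n powr (-3/2))"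
    by (intro summable_mult) (simp add: summable_real_powr_iff)
qed


lemma limsup_null:
  assumes bm: "std_bm2 M W1 W2" and la: "levy_area M W1 W2 A" and eps: "0 < \<epsilon>"
  shows "limsup (\<lambda>n. if 2 \<le> n then {\<omega>\<in>space M. lil_phi (tseq n) * hbm_max W1 W2 A (tseq (n - 1)) \<omega> > \<epsilon>} else {}) \<in> null_sets M"
proof (rule borel_cantelli_limsup1)
  interpret prob_space M using bm by (simp add: std_bm2_def)
  fix n
  show "(if 2 \<le> n then {\<omega>\<in>space M. lil_phi (tseq n) * hbm_max W1 W2 A (tseq (n - 1)) \<omega> > \<epsilon>} else {}) \<in> sets M"
  proof (cases "2 \<le> n")
    case True
    have "0 < tseq (n - 1)" unfolding tseq_def using True by simp
    then have [measurable]: "hbm_max W1 W2 A (tseq (n - 1)) \<in> borel_measurable M"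
      by (rule hbm_measurable[OF bm la])
    have "{\<omega>\<in>space M. lil_phi (tseq n) * hbm_max W1 W2 A (tseq (n - 1)) \<omega> > \<epsilon>} \<in> sets M"
      by measurable
    then show ?thesis using True by simp
  qed simp
  then show "emeasure M (if 2 \<le> n then {\<omega>\<in>space M. lil_phi (tseq n) * hbm_max W1 W2 A (tseq (n - 1)) \<omega> > \<epsilon>} else {}) < \<infinity>"
    by (simp add: less_top[symmetric])
next
  show "summable (\<lambda>n. measure M (if 2 \<le> n then {\<omega>\<in>space M. lil_phi (tseq n) * hbm_max W1 W2 A (tseq (n - 1)) \<omega> > \<epsilon>} else {}))"
    by (rule summable_tail[OF bm la eps])
qed

theorem lemma5p2:
  fixes M :: "'a measure" and W1 W2 A :: "real \<Rightarrow> 'a \<Rightarrow> real"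
  assumes "std_bm2 M W1 W2"
    and "levy_area M W1 W2 A"
  shows "(\<forall>\<epsilon>>0. measure M (\<Inter>k\<in>{2..}. \<Union>n\<in>{k..}.
            {\<omega>\<in>space M. lil_phi (tseq n) * hbm_max W1 W2 A (tseq (n - 1)) \<omega> > \<epsilon>}) = 0)
       \<and> (AE \<omega> in M. (\<lambda>n. lil_phi (tseq n) * hbm_max W1 W2 A (tseq (n - 1)) \<omega>) \<longlonglongrightarrow> 0)"
proof -
  note bm = assms(1) and la = assms(2)
  interpret prob_space M using bm by (simp add: std_bm2_def)
  define S where "S \<epsilon> n = {\<omega>\<in>space M. lil_phi (tseq n) * hbm_max W1 W2 A (tseq (n - 1)) \<omega> > \<epsilon>}" for \<epsilon> n
  define B where "B \<epsilon> n = (if 2 \<le> n then S \<epsilon> n else {})" for \<epsilon> n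
  have null: "limsup (B \<epsilon>) \<in> null_sets M" if "0 < \<epsilon>" for \<epsilon>
    unfolding B_def S_def by (rule limsup_null[OF bm la that])
  have eq: "(\<Inter>k\<in>{2..}. \<Union>n\<in>{k..}. S \<epsilon> n) = limsup (B \<epsilon>)" for \<epsilon>
  proof
    show "(\<Inter>k\<in>{2..}. \<Union>n\<in>{k..}. S \<epsilon> n) \<subseteq> limsup (B \<epsilon>)"
    proof
      fix x assume x: "x \<in> (\<Inter>k\<in>{2..}. \<Union>n\<in>{k..}. S \<epsilon> n)"
      have "\<exists>m\<ge>k. x \<in> B \<epsilon> m" for k
      proof -
        from x have "x \<in> (\<Union>n\<in>{max k 2..}. S \<epsilon> n)" by auto
        then obtain m where "max k 2 \<le> m" "x \<in> S \<epsilon> m" by auto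
        then show ?thesis unfolding B_def by (intro exI[of _ m]) auto
      qed
      then show "x \<in> limsup (B \<epsilon>)" unfolding limsup_INF_SUP by auto
    qed
    show "limsup (B \<epsilon>) \<subseteq> (\<Inter>k\<in>{2..}. \<Union>n\<in>{k..}. S \<epsilon> n)"
    proof
      fix x assume "x \<in> limsup (B \<epsilon>)"
      then have x: "\<forall>k. \<exists>m\<ge>k. x \<in> B \<epsilon> m" unfolding limsup_INF_SUP by auto
      show "x \<in> (\<Inter>k\<in>{2..}. \<Union>n\<in>{k..}. S \<epsilon> n)"
      proof
        fix k :: nat assume "k \<in> {2..}"
        from x obtain m where "k \<le> m" "x \<in> B \<epsilon> m" by blast
        then show "x \<in> (\<Union>n\<in>{k..}. S \<epsilon> n)" unfolding B_def by (auto split: if_splits)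
      qed
    qed
  qed
  have part1: "\<forall>\<epsilon>>0. measure M (\<Inter>k\<in>{2..}. \<Union>n\<in>{k..}. S \<epsilon> n) = 0"
  proof (intro allI impI)
    fix \<epsilon> :: real assume "0 < \<epsilon>"
    then have "limsup (B \<epsilon>) \<in> null_sets M" by (rule null)
    then show "measure M (\<Inter>k\<in>{2..}. \<Union>n\<in>{k..}. S \<epsilon> n) = 0" unfolding eq
      by (simp add: null_sets_def measure_def)
  qed
  define N where "N = (\<Union>m::nat. limsup (B (1 / real (Suc m))))"
  have Nnull: "N \<in> null_sets M" unfolding N_def
    by (intro null_sets_UN null) simp
  have part2: "AE \<omega> in M. (\<lambda>n. lil_phi (tseq n) * hbm_max W1 W2 A (tseq (n - 1)) \<omega>) \<longlonglongrightarrow> 0"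
  proof (rule AE_I'[OF Nnull], rule subsetI, rule ccontr)
    fix \<omega> assume "\<omega> \<in> {\<omega>\<in>space M. \<not> (\<lambda>n. lil_phi (tseq n) * hbm_max W1 W2 A (tseq (n - 1)) \<omega>) \<longlonglongrightarrow> 0}"
    then have \<omega>: "\<omega> \<in> space M" and nc: "\<not> (\<lambda>n. lil_phi (tseq n) * hbm_max W1 W2 A (tseq (n - 1)) \<omega>) \<longlonglongrightarrow> 0" by auto
    assume "\<omega> \<notin> N"
    then have nl: "\<omega> \<notin> limsup (B (1 / real (Suc m)))" for m unfolding N_def by auto
    have ev: "\<exists>k. \<forall>n\<ge>k. lil_phi (tseq n) * hbm_max W1 W2 A (tseq (n - 1)) \<omega> \<le> 1 / real (Suc m)" for m
    proof -
      from nl[of m] obtain k where k: "\<forall>n\<ge>k. \<omega> \<notin> B (1 / real (Suc m)) n" unfolding limsup_INF_SUP by auto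
      show ?thesis
      proof (intro exI allI impI)
        fix n assume "max k 2 \<le> n"
        then have "\<omega> \<notin> S (1 / real (Suc m)) n" using k unfolding B_def by auto
        then show "lil_phi (tseq n) * hbm_max W1 W2 A (tseq (n - 1)) \<omega> \<le> 1 / real (Suc m)"
          using \<omega> unfolding S_def by auto
      qed
    qed
    have "(\<lambda>n. lil_phi (tseq n) * hbm_max W1 W2 A (tseq (n - 1)) \<omega>) \<longlonglongrightarrow> 0"
    proof (rule LIMSEQ_I)
      fix r :: real assume r: "0 < r"
      obtain m where m: "inverse (real (Suc m)) < r" using reals_Archimedean[OF r] by blast
      obtain k where k: "\<forall>n\<ge>k. lil_phi (tseq n) * hbm_max W1 W2 A (tseq (n - 1)) \<omega> \<le> 1 / real (Suc m)"
        using ev by blast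
      show "\<exists>no. \<forall>n\<ge>no. norm (lil_phi (tseq n) * hbm_max W1 W2 A (tseq (n - 1)) \<omega> - 0) < r"
      proof (intro exI allI impI)
        fix n assume n: "max k 3 \<le> n"
        have "0 < tseq (n - 1)" unfolding tseq_def using n by simp
        then have h0: "0 \<le> hbm_max W1 W2 A (tseq (n - 1)) \<omega>" by (rule hbm_nonneg[OF bm la _ \<omega>])
        have p0: "0 \<le> lil_phi (tseq n)" using n by (intro phi_nonneg) simp
        have "lil_phi (tseq n) * hbm_max W1 W2 A (tseq (n - 1)) \<omega> \<le> 1 / real (Suc m)" using k n by simp
        then show "norm (lil_phi (tseq n) * hbm_max W1 W2 A (tseq (n - 1)) \<omega> - 0) < r"
          using h0 p0 m by (simp add: inverse_eq_divide)
      qed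
    qed
    then show False using nc by simp
  qed
  show ?thesis using part1 part2 unfolding S_def by blast
qed


end
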